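(* For every integer $i\ge 1$, the sequence $\{d_i(m)\}_{m\ge i}$ is strictly ratio-log-convex; that is, for every $i\ge 1$ and every $m\ge i+2$, $$\left(\frac{d_i(m)}{d_i(m-1)}\right)^2<\frac{d_i(m-1)}{d_i(m-2)}\cdot\frac{d_i(m+1)}{d_i(m)}.$$
   Context: For integers $m\ge 0$ and $0\le i\le m$, the Boros–Moll numbers are $$d_i(m)=2^{-2m}\sum_{k=i}^{m}2^k\binom{2m-2k}{m-k}\binom{m+k}{k}\binom{k}{i}.$$ *)

theory Defs
  imports Complex_Main
begin

definition boros_moll :: "nat \<Rightarrow> nat \<Rightarrow> real" where
  "boros_moll i m = (1 / 2 ^ (2 * m)) *
     (\<Sum>k = i..m. 2 ^ k * real ((2 * m - 2 * k) choose (m - k))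
        * real ((m + k) choose k) * real (k choose i))"

end

theory Submission
  imports Defs
begin

definition U :: "nat \<Rightarrow> nat \<Rightarrow> nat \<Rightarrow> real" where
  "U i l j = 2^(i+l) * fact(2*j) * fact(2*i+2*l+j) / (fact j ^ 2 * fact (i+l+j) * fact i * fact l)"

definition SS :: "nat \<Rightarrow> nat \<Rightarrow> real" where
  "SS i p = (\<Sum>l\<le>p. U i l (p - l))"

lemma term_U:
  "2 ^ (i+l) * real ((2 * (i+l+j) - 2 * (i+l)) choose ((i+l+j) - (i+l)))
        * real (((i+l+j) + (i+l)) choose (i+l)) * real ((i+l) choose i) = U i l j"
proof -
  have e1: "2 * (i+l+j) - 2 * (i+l) = 2*j" "(i+l+j) - (i+l) = j" by auto
  have c1: "real ((2*j) choose j) = fact (2*j) / (fact j * fact j)"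
    using binomial_fact[of j "2*j", where 'a=real] by (simp add: mult_2)
  have c2: "real ((2*i+2*l+j) choose (i+l)) = fact (2*i+2*l+j) / (fact (i+l) * fact (i+l+j))"
    using binomial_fact[of "i+l" "2*i+2*l+j", where 'a=real] by (simp add: algebra_simps)
  have c3: "real ((i+l) choose i) = fact (i+l) / (fact i * fact l)"
    using binomial_fact[of i "i+l", where 'a=real] by simp
  have e2: "(i+l+j) + (i+l) = 2*i+2*l+j" by simp
  show ?thesis unfolding e1 e2 c1 c2 c3 U_def
    by (simp add: field_simps power2_eq_square)
qed

lemma bm_SS: "boros_moll i (i+p) = SS i p / 4^(i+p)"
proof -
  have shift: "\<And>f::nat\<Rightarrow>real. (\<Sum>k=i..i+p. f k) = (\<Sum>l=0..p. f (l+i))"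
    using sum.shift_bounds_cl_nat_ivl[of _ 0 i p] by (simp add: add.commute)
  have "(\<Sum>k = i..i+p. 2 ^ k * real ((2 * (i+p) - 2 * k) choose ((i+p) - k))
        * real (((i+p) + k) choose k) * real (k choose i))
      = (\<Sum>l = 0..p. 2 ^ (l+i) * real ((2 * (i+p) - 2 * (l+i)) choose ((i+p) - (l+i)))
        * real (((i+p) + (l+i)) choose (l+i)) * real ((l+i) choose i))"
    by (rule shift)
  also have "\<dots> = (\<Sum>l\<le>p. U i l (p - l))"
    unfolding atLeast0AtMost
  proof (rule sum.cong[OF refl])
    fix l assume "l \<in> {..p}"
    then obtain j where p: "p = l + j" by (metis atMost_iff le_add_diff_inverse)
    show "2 ^ (l+i) * real ((2 * (i+p) - 2 * (l+i)) choose ((i+p) - (l+i)))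
        * real (((i+p) + (l+i)) choose (l+i)) * real ((l+i) choose i) = U i l (p - l)"
      using term_U[of i l j] unfolding p by (simp add: add.commute add.left_commute)
  qed
  finally have "(\<Sum>k = i..i+p. 2 ^ k * real ((2 * (i+p) - 2 * k) choose ((i+p) - k))
        * real (((i+p) + k) choose k) * real (k choose i)) = SS i p" unfolding SS_def .
  moreover have "(2::real)^(2*(i+p)) = 4^(i+p)" unfolding power_mult by simp
  ultimately show ?thesis unfolding boros_moll_def by simp
qed

lemma U_pos: "U i l j > 0"
  unfolding U_def by (intro divide_pos_pos mult_pos_pos) auto

lemma Uj: "U i l (Suc j) = U i l j * (2*(2*real j+1)*(2*real i+2*real l+real j+1)) / ((real j+1)*(real i+real l+real j+1))"
proof -
  have a: "2 * Suc j = Suc (Suc (2*j))" "2*i+2*l+Suc j = Suc (2*i+2*l+j)" "i+l+Suc j = Suc (i+l+j)" by auto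
  have p: "fact j > (0::real)" "fact (i+l+j) > (0::real)" "fact i > (0::real)" "fact l > (0::real)" by auto
  show ?thesis unfolding U_def a fact_Suc
    apply (simp only: of_nat_Suc of_nat_add of_nat_mult power2_eq_square)
    using p apply (simp add: divide_simps)
    by algebra
qed

lemma Ul: "U i (Suc l) j = U i l (Suc j) * ((real j+1)*(2*real i+2*real l+real j+2)) / ((2*real j+1)*(real l+1))"
proof -
  have a: "2 * Suc j = Suc (Suc (2*j))" "2*i+2*l+Suc j = Suc (2*i+2*l+j)" "i+l+Suc j = Suc (i+l+j)"
     "2*i+2*Suc l+j = Suc (Suc (2*i+2*l+j))" "i + Suc l + j = Suc (i+l+j)" "i + Suc l = Suc (i+l)" by auto
  have p: "fact j > (0::real)" "fact (i+l+j) > (0::real)" "fact i > (0::real)" "fact l > (0::real)" by auto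
  show ?thesis unfolding U_def a fact_Suc
    apply (simp only: of_nat_Suc of_nat_add of_nat_mult power2_eq_square)
    using p apply (simp add: divide_simps)
    by algebra
qed

definition Al :: "real \<Rightarrow> real \<Rightarrow> real" where "Al i m = 2*(m+1)*(8*m^2+24*m+19-4*i^2)"
definition Be :: "real \<Rightarrow> real \<Rightarrow> real" where "Be i m = (m+i+1)*(4*m+3)*(4*m+5)"
definition De :: "real \<Rightarrow> real \<Rightarrow> real" where "De i m = 4*(m+2-i)*(m+1)*(m+2)"
definition P2 :: "real \<Rightarrow> real \<Rightarrow> real \<Rightarrow> real" where
  "P2 m i k = 8 - 14*k + 8*k^2 + 8*i + 4*i*k - 4*i*k^2 + 20*m - 20*m*k + 4*m*k^2 + 12*m*i
     + 16*m^2 - 8*m^2*k + 4*m^2*i + 4*m^3"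






lemma tele:
  fixes i l j :: nat
  assumes m: "m = real i + real l + real j + 1"
  shows "De i m * U i l (j+3) - 4*Al i m * U i l (j+2) + 16*Be i m * U i l (j+1)
    = 16*( ((real l+1)*(2*real j+1)*P2 m i (real i+real l+1)/((real j+1)*(real j+2))) * U i (l+1) j
         - (real l*(2*real j+3)*P2 m i (real i+real l)/((real j+2)*(real j+3))) * U i l (j+1))"
proof -
  define u where "u = U i l (j+1)"
  have u: "u > 0" unfolding u_def by (rule U_pos)
  have e2: "U i l (j+2) = u * (2*(2*(real j+1)+1)*(2*real i+2*real l+(real j+1)+1)) / ((real j+2)*(real i+real l+real j+2))"
    using Uj[of i l "j+1"] unfolding u_def by (simp add: add_ac)
  have e3: "U i l (j+3) = U i l (j+2) * (2*(2*(real j+2)+1)*(2*real i+2*real l+(real j+2)+1)) / ((real j+3)*(real i+real l+real j+3))"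
    using Uj[of i l "j+2"] by (simp add: add_ac numeral_3_eq_3 numeral_2_eq_2)
  have e4: "U i (l+1) j = u * ((real j+1)*(2*real i+2*real l+real j+2)) / ((2*real j+1)*(real l+1))"
    using Ul[of i l j] unfolding u_def by simp
  show ?thesis unfolding e3 e2 e4 u_def[symmetric] m Al_def Be_def De_def P2_def
    using u by (simp add: divide_simps) algebra
qed

lemma closing:
  fixes i p :: nat
  assumes m: "m = real i + real p"
  shows "16*(real p*P2 m i (real i+real p)/2 * U i p 0) + De i m * U i p 2 - 4*Al i m * U i p 1
     + 16*Be i m * U i p 0 + De i m * U i (p+1) 1 - 4*Al i m * U i (p+1) 0 + De i m * U i (p+2) 0 = 0"
proof -
  define x where "x = real i"
  define y where "y = real p"
  have x: "x \<ge> 0" "y \<ge> 0" unfolding x_def y_def by auto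
  have e1: "U i p 1 * (x+y+1) = U i p 0 * (2*(2*x+2*y+1))"
    using Uj[of i p 0] x unfolding x_def y_def by (simp add: field_simps)
  have e2: "U i p 2 * (2*(x+y+2)) = U i p 1 * (6*(2*x+2*y+2))"
    using Uj[of i p 1] x unfolding x_def y_def by (simp add: field_simps numeral_2_eq_2)
  have e3: "U i (p+1) 0 * (y+1) = U i p 1 * (2*x+2*y+2)"
    using Ul[of i p 0] x unfolding x_def y_def by (simp add: field_simps)
  have e4: "U i (p+1) 1 * (x+y+2) = U i (p+1) 0 * (2*(2*x+2*y+3))"
    using Uj[of i "p+1" 0] x unfolding x_def y_def by (simp add: field_simps)
  have e5: "U i (p+2) 0 * (y+2) = U i (p+1) 1 * (2*x+2*y+4)"
    using Ul[of i "p+1" 0] x unfolding x_def y_def by (simp add: field_simps numeral_2_eq_2)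
  have "(x+y+1)*(x+y+2)*(y+1)*(y+2)*(16*(y*P2 (x+y) x (x+y)/2 * U i p 0) + De x (x+y) * U i p 2 - 4*Al x (x+y) * U i p 1
     + 16*Be x (x+y) * U i p 0 + De x (x+y) * U i (p+1) 1 - 4*Al x (x+y) * U i (p+1) 0 + De x (x+y) * U i (p+2) 0) = 0"
    unfolding Al_def Be_def De_def P2_def using e1 e2 e3 e4 e5 by algebra
  moreover have "(x+y+1)*(x+y+2)*(y+1)*(y+2) \<noteq> 0" using x by (simp add: add_nonneg_eq_0_iff)
  ultimately show ?thesis unfolding m x_def[symmetric] y_def[symmetric] by simp
qed

lemma base_rec:
  fixes i :: nat
  assumes m: "m = real i - 1"
  shows "De i m * (U i 0 1 + U i 1 0) = 4 * Al i m * U i 0 0"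
proof -
  define u where "u = U i 0 0"
  define x where "x = real i"
  have x: "x \<ge> 0" unfolding x_def by simp
  have e1: "U i 0 1 * (x+1) = u * (2*(2*x+1))"
    using Uj[of i 0 0] unfolding u_def x_def by (simp add: field_simps)
  have e3: "U i 1 0 = U i 0 1 * (2*x+2)"
    using Ul[of i 0 0] unfolding x_def by simp
  show ?thesis unfolding e3 u_def[symmetric] m Al_def Be_def De_def x_def[symmetric]
    using e1 by algebra
qed

lemma SS_split: "SS i (p+k) = (\<Sum>l<p. U i l (p+k-l)) + (\<Sum>l\<le>k. U i (p+l) (k-l))"
proof -
  have un: "{..p+k} = {..<p} \<union> {p..p+k}" by auto
  have dj: "{..<p} \<inter> {p..p+k} = {}" by auto
  have "SS i (p+k) = (\<Sum>l\<in>{..<p} \<union> {p..p+k}. U i l (p+k-l))"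
    unfolding SS_def un ..
  also have "\<dots> = (\<Sum>l<p. U i l (p+k-l)) + (\<Sum>l=p..p+k. U i l (p+k-l))"
    by (rule sum.union_disjoint[OF finite_lessThan finite_atLeastAtMost dj])
  also have "(\<Sum>l=p..p+k. U i l (p+k-l)) = (\<Sum>l=0..k. U i (l+p) (p+k-(l+p)))"
    using sum.shift_bounds_cl_nat_ivl[of "\<lambda>l. U i l (p+k-l)" 0 p k] by (simp add: add.commute)
  also have "\<dots> = (\<Sum>l\<le>k. U i (p+l) (k-l))"
    by (simp add: atLeast0AtMost add.commute)
  finally show ?thesis .
qed

lemma recur:
  fixes i p :: nat
  assumes m: "m = real i + real p"
  shows "De i m * SS i (p+2) - 4*Al i m * SS i (p+1) + 16*Be i m * SS i p = 0"
proof -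
  define G where "G l = real l*(2*real (p-l)+1)*P2 m i (real i+real l)/((real (p-l)+1)*(real (p-l)+2)) * U i l (p-l)" for l
  have tel: "De i m * U i l (p+2-l) - 4*Al i m * U i l (p+1-l) + 16*Be i m * U i l (p-l) = 16*(G (Suc l) - G l)"
    if "l < p" for l
  proof -
    obtain j where pj0: "p = Suc (l + j)" using less_imp_Suc_add[OF \<open>l < p\<close>] by blast
    have pj: "p = l + j + 1" using pj0 by simp
    have mm: "m = real i + real l + real j + 1" using m pj by simp
    have a: "p+2-l = j+3" "p+1-l = j+2" "p-l = j+1" "p - Suc l = j" using pj by auto
    have g1: "G (Suc l) = ((real l+1)*(2*real j+1)*P2 m i (real i+real l+1)/((real j+1)*(real j+2))) * U i (l+1) j"
      unfolding G_def a by (simp add: add_ac)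
    have g0: "G l = (real l*(2*real j+3)*P2 m i (real i+real l)/((real j+2)*(real j+3))) * U i l (j+1)"
      unfolding G_def a by (simp add: add_ac numeral_eq_Suc)
    show ?thesis unfolding a g1 g0 by (rule tele[OF mm])
  qed
  have s2: "SS i (p+2) = (\<Sum>l<p. U i l (p+2-l)) + U i p 2 + U i (p+1) 1 + U i (p+2) 0"
    using SS_split[of i p 2] by (simp add: numeral_2_eq_2)
  have s1: "SS i (p+1) = (\<Sum>l<p. U i l (p+1-l)) + U i p 1 + U i (p+1) 0"
    using SS_split[of i p 1] by simp
  have s0: "SS i p = (\<Sum>l<p. U i l (p-l)) + U i p 0"
    using SS_split[of i p 0] by simp
  have "De i m * (\<Sum>l<p. U i l (p+2-l)) - 4*Al i m * (\<Sum>l<p. U i l (p+1-l)) + 16*Be i m * (\<Sum>l<p. U i l (p-l))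
      = (\<Sum>l<p. De i m * U i l (p+2-l) - 4*Al i m * U i l (p+1-l) + 16*Be i m * U i l (p-l))"
    by (simp add: sum_distrib_left sum_subtractf sum.distrib)
  also have "\<dots> = (\<Sum>l<p. 16*(G (Suc l) - G l))"
    by (rule sum.cong[OF refl], rule tel, simp)
  also have "\<dots> = 16*(G p - G 0)"
    using sum_lessThan_telescope[of "\<lambda>l. 16 * G l" p] by (simp add: right_diff_distrib)
  also have "\<dots> = 16*(real p*P2 m i (real i+real p)/2 * U i p 0)"
    by (simp add: G_def)
  finally have T: "De i m * (\<Sum>l<p. U i l (p+2-l)) - 4*Al i m * (\<Sum>l<p. U i l (p+1-l)) + 16*Be i m * (\<Sum>l<p. U i l (p-l))
      = 16*(real p*P2 m i (real i+real p)/2 * U i p 0)" .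
  show ?thesis using closing[OF m] T unfolding s2 s1 s0 by (simp only: ring_distribs)
qed

definition ap :: "real \<Rightarrow> real \<Rightarrow> real" where "ap x n = 8*n^2+24*n+19-4*x^2"
definition bb :: "real \<Rightarrow> real \<Rightarrow> real" where "bb x n = (n+x+1)*(4*n+3)*(4*n+5)"
definition HH :: "real \<Rightarrow> real \<Rightarrow> real" where "HH x y = x^2+y+5*x"
definition XX :: "real \<Rightarrow> real \<Rightarrow> real" where "XX x y = (4*(x+y)^2+7*(x+y)+x+3)*HH x y + y*x^2"
definition Fh0 :: "real \<Rightarrow> real \<Rightarrow> real" where
  "Fh0 x y = (x+y+2)^2*(y+2)^2*(ap x (x+y+1)*ap x (x+y) - bb x (x+y+1)*(y+2))*XX x y^4"
definition Fh1 :: "real \<Rightarrow> real \<Rightarrow> real" where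
  "Fh1 x y = - ((y+1)*HH x y*XX x y^3*((x+y+2)^2*(y+2)^2*ap x (x+y+1)*bb x (x+y) + (x+y+1)*(x+y+3)*(y+3)*ap x (x+y)^3))"
definition Fh2 :: "real \<Rightarrow> real \<Rightarrow> real" where
  "Fh2 x y = 3*(x+y+1)*(x+y+3)*(y+3)*(y+1)^2*HH x y^2*ap x (x+y)^2*bb x (x+y)*XX x y^2"
definition Fh3 :: "real \<Rightarrow> real \<Rightarrow> real" where
  "Fh3 x y = - (3*(x+y+1)*(x+y+3)*(y+3)*(y+1)^3*HH x y^3*ap x (x+y)*bb x (x+y)^2*XX x y)"
definition Fh4 :: "real \<Rightarrow> real \<Rightarrow> real" where
  "Fh4 x y = (x+y+1)*(x+y+3)*(y+3)*(y+1)^4*HH x y^4*bb x (x+y)^3"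

lemmas pdefs = ap_def bb_def HH_def XX_def Fh0_def Fh1_def Fh2_def Fh3_def Fh4_def

lemma polyI1: "XX (real j + 1) (real kk)*(ap (real j + 1) ((real j + 1)+(real kk))*HH (real j + 1) ((real kk)+1) - XX (real j + 1) ((real kk)+1)) - bb (real j + 1) ((real j + 1)+(real kk))*((real kk)+1)*HH (real j + 1) (real kk)*HH (real j + 1) ((real kk)+1) = real (162 + 225*kk + 71*kk^2 + 8*kk^3 + 585*j + 745*j*kk + 174*j*kk^2 + 14*j*kk^3 + 807*j^2 + 941*j^2*kk + 140*j^2*kk^2 + 6*j^2*kk^3 + 521*j^3 + 559*j^3*kk + 38*j^3*kk^2 + 151*j^4 + 152*j^4*kk + 1*j^4*kk^2 + 14*j^5 + 14*j^5*kk)"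
  unfolding pdefs by (simp only: of_nat_add of_nat_mult of_nat_power of_nat_numeral of_nat_1) algebra

lemma polyI1_pos: "0 < XX (real j + 1) (real kk)*(ap (real j + 1) ((real j + 1)+(real kk))*HH (real j + 1) ((real kk)+1) - XX (real j + 1) ((real kk)+1)) - bb (real j + 1) ((real j + 1)+(real kk))*((real kk)+1)*HH (real j + 1) (real kk)*HH (real j + 1) ((real kk)+1)"
proof -
  have h: "(0::nat) < 162 + 225*kk + 71*kk^2 + 8*kk^3 + 585*j + 745*j*kk + 174*j*kk^2 + 14*j*kk^3 + 807*j^2 + 941*j^2*kk + 140*j^2*kk^2 + 6*j^2*kk^3 + 521*j^3 + 559*j^3*kk + 38*j^3*kk^2 + 151*j^4 + 152*j^4*kk + 1*j^4*kk^2 + 14*j^5 + 14*j^5*kk" by simp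
  have "(0::real) < real (162 + 225*kk + 71*kk^2 + 8*kk^3 + 585*j + 745*j*kk + 174*j*kk^2 + 14*j*kk^3 + 807*j^2 + 941*j^2*kk + 140*j^2*kk^2 + 6*j^2*kk^3 + 521*j^3 + 559*j^3*kk + 38*j^3*kk^2 + 151*j^4 + 152*j^4*kk + 1*j^4*kk^2 + 14*j^5 + 14*j^5*kk)" using h by (simp only: of_nat_0_less_iff)
  then show ?thesis by (simp only: polyI1)
qed

lemma polyP0: "ap (real j + 1) ((real j + 1)+(real kk)+1)*ap (real j + 1) ((real j + 1)+(real kk)) - bb (real j + 1) ((real j + 1)+(real kk)+1)*((real kk)+2) = real (3321 + 4806*kk + 2529*kk^2 + 576*kk^3 + 48*kk^4 + 3956*j + 4482*j*kk + 1632*j*kk^2 + 192*j*kk^3 + 1592*j^2 + 1248*j^2*kk + 240*j^2*kk^2 + 256*j^3 + 96*j^3*kk + 16*j^4)"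
  unfolding pdefs by (simp only: of_nat_add of_nat_mult of_nat_power of_nat_numeral of_nat_1) algebra

lemma polyP0_pos: "0 < ap (real j + 1) ((real j + 1)+(real kk)+1)*ap (real j + 1) ((real j + 1)+(real kk)) - bb (real j + 1) ((real j + 1)+(real kk)+1)*((real kk)+2)"
proof -
  have h: "(0::nat) < 3321 + 4806*kk + 2529*kk^2 + 576*kk^3 + 48*kk^4 + 3956*j + 4482*j*kk + 1632*j*kk^2 + 192*j*kk^3 + 1592*j^2 + 1248*j^2*kk + 240*j^2*kk^2 + 256*j^3 + 96*j^3*kk + 16*j^4" by simp
  have "(0::real) < real (3321 + 4806*kk + 2529*kk^2 + 576*kk^3 + 48*kk^4 + 3956*j + 4482*j*kk + 1632*j*kk^2 + 192*j*kk^3 + 1592*j^2 + 1248*j^2*kk + 240*j^2*kk^2 + 256*j^3 + 96*j^3*kk + 16*j^4)" using h by (simp only: of_nat_0_less_iff)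
  then show ?thesis by (simp only: polyP0)
qed

lemma polyF1: "4*Fh0 (real j + 1) (real kk) + 1*Fh1 (real j + 1) (real kk) = real (17650087272000 + 131176669406400*kk + 459915055338960*kk^2 + 1011094693032528*kk^3 + 1562622542788104*kk^4 + 1803974325050312*kk^5 + 1613581552325636*kk^6 + 1144661076360520*kk^7 + 653828901918750*kk^8 + 303570609118202*kk^9 + 115154825455792*kk^10 + 35739506331001*kk^11 + 9056569124802*kk^12 + 1863098896305*kk^13 + 308030783024*kk^14 + 40291438712*kk^15 + 4071170848*kk^16 + 306220544*kk^17 + 16129024*kk^18 + 530432*kk^19 + 8192*kk^20 + 192102386594400*j + 1365881343023520*j*kk + 4569629439684024*j*kk^2 + 9558430529048808*j*kk^3 + 14009654510543312*j*kk^4 + 15282013923903044*j*kk^5 + 12861366624354182*j*kk^6 + 8542922795610930*j*kk^7 + 4543218017942382*j*kk^8 + 1950838562141125*j*kk^9 + 678929601608366*j*kk^10 + 191440534473785*j*kk^11 + 43543764977282*j*kk^12 + 7917103297584*j*kk^13 + 1133622225024*j*kk^14 + 124889253376*j*kk^15 + 10206243072*j*kk^16 + 582245376*j*kk^17 + 20680704*j*kk^18 + 344064*j*kk^19 + 981188420762160*j^2 + 6658624318339944*j^2*kk + 21201774360493716*j^2*kk^2 + 42074224479002544*j^2*kk^3 + 58295552034915266*j^2*kk^4 + 59867557124077224*j^2*kk^5 + 47213028187453236*j^2*kk^6 + 29226659981949114*j^2*kk^7 + 14393198374411171*j^2*kk^8 + 5679788377184450*j^2*kk^9 + 1799940976916542*j^2*kk^10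 + 456948252873064*j^2*kk^11 + 92245591622093*j^2*kk^12 + 14611470266300*j^2*kk^13 + 1777394522344*j^2*kk^14 + 160497164864*j^2*kk^15 + 10174290176*j^2*kk^16 + 409176064*j^2*kk^17 + 8321024*j^2*kk^18 + 32768*j^2*kk^19 + 3127822196316048*j^3 + 20208673798062804*j^3*kk + 61071121442551986*j^3*kk^2 + 114621978245801382*j^3*kk^3 + 149606241522993726*j^3*kk^4 + 144077305182791168*j^3*kk^5 + 105993318085665322*j^3*kk^6 + 60834631211107982*j^3*kk^7 + 27576740152785864*j^3*kk^8 + 9930314549163795*j^3*kk^9 + 2841391902263624*j^3*kk^10 + 642740163866487*j^3*kk^11 + 113667974330936*j^3*kk^12 + 15421229647832*j^3*kk^13 + 1557107565504*j^3*kk^14 + 111401809920*j^3*kk^15 + 5185080320*j^3*kk^16 + 132241408*j^3*kk^17 + 1146880*j^3*kk^18 + 6981640010363052*j^4 + 42830472901873122*j^4*kk + 122479195755455730*j^4*kk^2 + 216683221806701853*j^4*kk^3 + 265414851222852414*j^4*kk^4 + 238666747929770431*j^4*kk^5 + 162984163281239262*j^4*kk^6 + 86236899543186020*j^4*kk^7 + 35743212612816961*j^4*kk^8 + 11652095789808900*j^4*kk^9 + 2981471903210459*j^4*kk^10 + 593809596502200*j^4*kk^11 + 90606410775384*j^4*kk^12 + 10317927826256*j^4*kk^13 + 840627434272*j^4*kk^14 + 45651096192*j^4*kk^15 + 1450045952*j^4*kk^16 + 20129792*j^4*kk^17 + 49152*j^4*kk^18 + 11604317054529510*j^5 + 67401167651547021*j^5*kk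 + 181798376734872582*j^5*kk^2 + 302069990836126231*j^5*kk^3 + 345809422436571070*j^5*kk^4 + 288987187559796238*j^5*kk^5 + 182197089285193002*j^5*kk^6 + 88309836458213190*j^5*kk^7 + 33216949164065668*j^5*kk^8 + 9715056467337164*j^5*kk^9 + 2198523271313744*j^5*kk^10 + 380212893701668*j^5*kk^11 + 49160343050400*j^5*kk^12 + 4585491887808*j^5*kk^13 + 291037808896*j^5*kk^14 + 11355550720*j^5*kk^15 + 223313920*j^5*kk^16 + 1376256*j^5*kk^17 + 14911390311509817*j^6 + 81748302961612428*j^6*kk + 207255042619405580*j^6*kk^2 + 322156031200294287*j^6*kk^3 + 343139705848894473*j^6*kk^4 + 265116933585098312*j^6*kk^5 + 153387936215471966*j^6*kk^6 + 67623013992422975*j^6*kk^7 + 22888043037057118*j^6*kk^8 + 5944055057958128*j^6*kk^9 + 1174480546140024*j^6*kk^10 + 173492844051472*j^6*kk^11 + 18598825466368*j^6*kk^12 + 1378678691520*j^6*kk^13 + 65190310528*j^6*kk^14 + 1700791296*j^6*kk^15 + 18176000*j^6*kk^16 + 32768*j^6*kk^17 + 15180710106374160*j^7 + 78292871700152282*j^7*kk + 185873337560508032*j^7*kk^2 + 269126363484050097*j^7*kk^3 + 265393727011372872*j^7*kk^4 + 188490662900340447*j^7*kk^5 + 99404639467470276*j^7*kk^6 + 39541931373111714*j^7*kk^7 + 11926437097502064*j^7*kk^8 + 2717384411350240*j^7*kk^9 + 461714032580032*j^7*kk^10 + 57108142057264*j^7*kk^11 + 4940386309504*j^7*kk^12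 + 279993858688*j^7*kk^13 + 9298561024*j^7*kk^14 + 146995200*j^7*kk^15 + 688128*j^7*kk^16 + 12448393600436034*j^8 + 60180028659230042*j^8*kk + 133240400818287900*j^8*kk^2 + 178857547332310858*j^8*kk^3 + 162404454258879427*j^8*kk^4 + 105352641023344366*j^8*kk^5 + 50259130358553893*j^8*kk^6 + 17873716522590772*j^8*kk^7 + 4749858172967072*j^8*kk^8 + 936001100483024*j^8*kk^9 + 134245234177776*j^8*kk^10 + 13560696573248*j^8*kk^11 + 914094503680*j^8*kk^12 + 37599903232*j^8*kk^13 + 806669824*j^8*kk^14 + 6594560*j^8*kk^15 + 8192*j^8*kk^16 + 8314030207970634*j^9 + 37528810202835873*j^9*kk + 77141637182511786*j^9*kk^2 + 95506456976422404*j^9*kk^3 + 79365193715823792*j^9*kk^4 + 46685096577435279*j^9*kk^5 + 19971104191973544*j^9*kk^6 + 6281730372629384*j^9*kk^7 + 1451044366895392*j^9*kk^8 + 243013412578608*j^9*kk^9 + 28739881383552*j^9*kk^10 + 2294801676864*j^9*kk^11 + 114878831616*j^9*kk^12 + 3178257408*j^9*kk^13 + 38371328*j^9*kk^14 + 114688*j^9*kk^15 + 4555073476600617*j^10 + 19116692031275704*j^10*kk + 36301980040560974*j^10*kk^2 + 41212424151670454*j^10*kk^3 + 31127140320210615*j^10*kk^4 + 16465518207186120*j^10*kk^5 + 6251870518216968*j^10*kk^6 + 1717014716509744*j^10*kk^7 + 339064997805664*j^10*kk^8 + 47198243578944*j^10*kk^9 + 4462312002304*j^10*kk^10 + 269118902784*j^10*kk^11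 + 9310414080*j^10*kk^12 + 152207360*j^10*kk^13 + 757760*j^10*kk^14 + 2055417369941128*j^11 + 7982710639215116*j^11*kk + 13927577115444442*j^11*kk^2 + 14404164538961674*j^11*kk^3 + 9810257312664992*j^11*kk^4 + 4621423111069300*j^11*kk^5 + 1538477729424288*j^11*kk^6 + 363110250402960*j^11*kk^7 + 60008386869120*j^11*kk^8 + 6739913717952*j^11*kk^9 + 487635382272*j^11*kk^10 + 20724152832*j^11*kk^11 + 437141504*j^11*kk^12 + 3129344*j^11*kk^13 + 764836569590248*j^12 + 2734682156861504*j^12*kk + 4356735529992024*j^12*kk^2 + 4074187885896072*j^12*kk^3 + 2479138802822680*j^12*kk^4 + 1027964854590592*j^12*kk^5 + 295510724684240*j^12*kk^6 + 58726013355968*j^12*kk^7 + 7892980861312*j^12*kk^8 + 685673814528*j^12*kk^9 + 35484997632*j^12*kk^10 + 939974656*j^12*kk^11 + 8998912*j^12*kk^12 + 234375604516768*j^13 + 767074347277344*j^13*kk + 1108092825040352*j^13*kk^2 + 928839591525168*j^13*kk^3 + 499408113999072*j^13*kk^4 + 179646545769168*j^13*kk^5 + 43729705453184*j^13*kk^6 + 7117728458944*j^13*kk^7 + 746694872576*j^13*kk^8 + 46965482496*j^13*kk^9 + 1540579328*j^13*kk^10 + 18980864*j^13*kk^11 + 58906501888944*j^14 + 175333240509504*j^14*kk + 227809370401520*j^14*kk^2 + 169398651994464*j^14*kk^3 + 79381991171008*j^14*kk^4 + 24312733366784*j^14*kk^5 + 4879558389632*j^14*kk^6 + 625027302912*j^14*kk^7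 + 47972242944*j^14*kk^8 + 1938841600*j^14*kk^9 + 30134272*j^14*kk^10 + 12056058068736*j^15 + 32395967280768*j^15*kk + 37499646819008*j^15*kk^2 + 24422757932160*j^15*kk^3 + 9799810647296*j^15*kk^4 + 2491099777728*j^15*kk^5 + 396549604864*j^15*kk^6 + 37517787136*j^15*kk^7 + 1872388096*j^15*kk^8 + 36405248*j^15*kk^9 + 1987182952704*j^16 + 4780162678784*j^16*kk + 4873161664512*j^16*kk^2 + 2734762922880*j^16*kk^3 + 917265805440*j^16*kk^4 + 186441979904*j^16*kk^5 + 22127200768*j^16*kk^6 + 1376321536*j^16*kk^7 + 33488896*j^16*kk^8 + 259514942976*j^17 + 553377820928*j^17*kk + 489773870080*j^17*kk^2 + 231688845056*j^17*kk^3 + 62713441792*j^17*kk^4 + 9599979520*j^17*kk^5 + 757473280*j^17*kk^6 + 23265280*j^17*kk^7 + 26209681152*j^18 + 48971298816*j^18*kk + 36934907904*j^18*kk^2 + 14268263424*j^18*kk^3 + 2944951552*j^18*kk^4 + 303587328*j^18*kk^5 + 11988992*j^18*kk^6 + 1972488192*j^19 + 3184749568*j^19*kk + 1995278848*j^19*kk^2 + 598343168*j^19*kk^3 + 84631552*j^19*kk^4 + 4440064*j^19*kk^5 + 104065024*j^20 + 142745600*j^20*kk + 71534592*j^20*kk^2 + 15138816*j^20*kk^3 + 1118208*j^20*kk^4 + 3432448*j^21 + 3915776*j^21*kk + 1474560*j^21*kk^2 + 172032*j^21*kk^3 + 53248*j^22 + 49152*j^22*kk + 12288*j^22*kk^2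)"
  unfolding pdefs by (simp only: of_nat_add of_nat_mult of_nat_power of_nat_numeral of_nat_1) algebra

lemma polyF1_pos: "0 < 4*Fh0 (real j + 1) (real kk) + 1*Fh1 (real j + 1) (real kk)"
proof -
  have h: "(0::nat) < 17650087272000 + 131176669406400*kk + 459915055338960*kk^2 + 1011094693032528*kk^3 + 1562622542788104*kk^4 + 1803974325050312*kk^5 + 1613581552325636*kk^6 + 1144661076360520*kk^7 + 653828901918750*kk^8 + 303570609118202*kk^9 + 115154825455792*kk^10 + 35739506331001*kk^11 + 9056569124802*kk^12 + 1863098896305*kk^13 + 308030783024*kk^14 + 40291438712*kk^15 + 4071170848*kk^16 + 306220544*kk^17 + 16129024*kk^18 + 530432*kk^19 + 8192*kk^20 + 192102386594400*j + 1365881343023520*j*kk + 4569629439684024*j*kk^2 + 9558430529048808*j*kk^3 + 14009654510543312*j*kk^4 + 15282013923903044*j*kk^5 + 12861366624354182*j*kk^6 + 8542922795610930*j*kk^7 + 4543218017942382*j*kk^8 + 1950838562141125*j*kk^9 + 678929601608366*j*kk^10 + 191440534473785*j*kk^11 + 43543764977282*j*kk^12 + 7917103297584*j*kk^13 + 1133622225024*j*kk^14 + 124889253376*j*kk^15 + 10206243072*j*kk^16 + 582245376*j*kk^17 + 20680704*j*kk^18 + 344064*j*kk^19 + 981188420762160*j^2 + 6658624318339944*j^2*kk + 21201774360493716*j^2*kk^2 + 42074224479002544*j^2*kk^3 + 58295552034915266*j^2*kk^4 + 59867557124077224*j^2*kk^5 + 47213028187453236*j^2*kk^6 + 29226659981949114*j^2*kk^7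 + 14393198374411171*j^2*kk^8 + 5679788377184450*j^2*kk^9 + 1799940976916542*j^2*kk^10 + 456948252873064*j^2*kk^11 + 92245591622093*j^2*kk^12 + 14611470266300*j^2*kk^13 + 1777394522344*j^2*kk^14 + 160497164864*j^2*kk^15 + 10174290176*j^2*kk^16 + 409176064*j^2*kk^17 + 8321024*j^2*kk^18 + 32768*j^2*kk^19 + 3127822196316048*j^3 + 20208673798062804*j^3*kk + 61071121442551986*j^3*kk^2 + 114621978245801382*j^3*kk^3 + 149606241522993726*j^3*kk^4 + 144077305182791168*j^3*kk^5 + 105993318085665322*j^3*kk^6 + 60834631211107982*j^3*kk^7 + 27576740152785864*j^3*kk^8 + 9930314549163795*j^3*kk^9 + 2841391902263624*j^3*kk^10 + 642740163866487*j^3*kk^11 + 113667974330936*j^3*kk^12 + 15421229647832*j^3*kk^13 + 1557107565504*j^3*kk^14 + 111401809920*j^3*kk^15 + 5185080320*j^3*kk^16 + 132241408*j^3*kk^17 + 1146880*j^3*kk^18 + 6981640010363052*j^4 + 42830472901873122*j^4*kk + 122479195755455730*j^4*kk^2 + 216683221806701853*j^4*kk^3 + 265414851222852414*j^4*kk^4 + 238666747929770431*j^4*kk^5 + 162984163281239262*j^4*kk^6 + 86236899543186020*j^4*kk^7 + 35743212612816961*j^4*kk^8 + 11652095789808900*j^4*kk^9 + 2981471903210459*j^4*kk^10 + 593809596502200*j^4*kk^11 + 90606410775384*j^4*kk^12 + 10317927826256*j^4*kk^13 + 840627434272*j^4*kk^14 + 45651096192*j^4*kk^15 + 1450045952*j^4*kk^16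 + 20129792*j^4*kk^17 + 49152*j^4*kk^18 + 11604317054529510*j^5 + 67401167651547021*j^5*kk + 181798376734872582*j^5*kk^2 + 302069990836126231*j^5*kk^3 + 345809422436571070*j^5*kk^4 + 288987187559796238*j^5*kk^5 + 182197089285193002*j^5*kk^6 + 88309836458213190*j^5*kk^7 + 33216949164065668*j^5*kk^8 + 9715056467337164*j^5*kk^9 + 2198523271313744*j^5*kk^10 + 380212893701668*j^5*kk^11 + 49160343050400*j^5*kk^12 + 4585491887808*j^5*kk^13 + 291037808896*j^5*kk^14 + 11355550720*j^5*kk^15 + 223313920*j^5*kk^16 + 1376256*j^5*kk^17 + 14911390311509817*j^6 + 81748302961612428*j^6*kk + 207255042619405580*j^6*kk^2 + 322156031200294287*j^6*kk^3 + 343139705848894473*j^6*kk^4 + 265116933585098312*j^6*kk^5 + 153387936215471966*j^6*kk^6 + 67623013992422975*j^6*kk^7 + 22888043037057118*j^6*kk^8 + 5944055057958128*j^6*kk^9 + 1174480546140024*j^6*kk^10 + 173492844051472*j^6*kk^11 + 18598825466368*j^6*kk^12 + 1378678691520*j^6*kk^13 + 65190310528*j^6*kk^14 + 1700791296*j^6*kk^15 + 18176000*j^6*kk^16 + 32768*j^6*kk^17 + 15180710106374160*j^7 + 78292871700152282*j^7*kk + 185873337560508032*j^7*kk^2 + 269126363484050097*j^7*kk^3 + 265393727011372872*j^7*kk^4 + 188490662900340447*j^7*kk^5 + 99404639467470276*j^7*kk^6 + 39541931373111714*j^7*kk^7 + 11926437097502064*j^7*kk^8 + 2717384411350240*j^7*kk^9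 + 461714032580032*j^7*kk^10 + 57108142057264*j^7*kk^11 + 4940386309504*j^7*kk^12 + 279993858688*j^7*kk^13 + 9298561024*j^7*kk^14 + 146995200*j^7*kk^15 + 688128*j^7*kk^16 + 12448393600436034*j^8 + 60180028659230042*j^8*kk + 133240400818287900*j^8*kk^2 + 178857547332310858*j^8*kk^3 + 162404454258879427*j^8*kk^4 + 105352641023344366*j^8*kk^5 + 50259130358553893*j^8*kk^6 + 17873716522590772*j^8*kk^7 + 4749858172967072*j^8*kk^8 + 936001100483024*j^8*kk^9 + 134245234177776*j^8*kk^10 + 13560696573248*j^8*kk^11 + 914094503680*j^8*kk^12 + 37599903232*j^8*kk^13 + 806669824*j^8*kk^14 + 6594560*j^8*kk^15 + 8192*j^8*kk^16 + 8314030207970634*j^9 + 37528810202835873*j^9*kk + 77141637182511786*j^9*kk^2 + 95506456976422404*j^9*kk^3 + 79365193715823792*j^9*kk^4 + 46685096577435279*j^9*kk^5 + 19971104191973544*j^9*kk^6 + 6281730372629384*j^9*kk^7 + 1451044366895392*j^9*kk^8 + 243013412578608*j^9*kk^9 + 28739881383552*j^9*kk^10 + 2294801676864*j^9*kk^11 + 114878831616*j^9*kk^12 + 3178257408*j^9*kk^13 + 38371328*j^9*kk^14 + 114688*j^9*kk^15 + 4555073476600617*j^10 + 19116692031275704*j^10*kk + 36301980040560974*j^10*kk^2 + 41212424151670454*j^10*kk^3 + 31127140320210615*j^10*kk^4 + 16465518207186120*j^10*kk^5 + 6251870518216968*j^10*kk^6 + 1717014716509744*j^10*kk^7 + 339064997805664*j^10*kk^8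 + 47198243578944*j^10*kk^9 + 4462312002304*j^10*kk^10 + 269118902784*j^10*kk^11 + 9310414080*j^10*kk^12 + 152207360*j^10*kk^13 + 757760*j^10*kk^14 + 2055417369941128*j^11 + 7982710639215116*j^11*kk + 13927577115444442*j^11*kk^2 + 14404164538961674*j^11*kk^3 + 9810257312664992*j^11*kk^4 + 4621423111069300*j^11*kk^5 + 1538477729424288*j^11*kk^6 + 363110250402960*j^11*kk^7 + 60008386869120*j^11*kk^8 + 6739913717952*j^11*kk^9 + 487635382272*j^11*kk^10 + 20724152832*j^11*kk^11 + 437141504*j^11*kk^12 + 3129344*j^11*kk^13 + 764836569590248*j^12 + 2734682156861504*j^12*kk + 4356735529992024*j^12*kk^2 + 4074187885896072*j^12*kk^3 + 2479138802822680*j^12*kk^4 + 1027964854590592*j^12*kk^5 + 295510724684240*j^12*kk^6 + 58726013355968*j^12*kk^7 + 7892980861312*j^12*kk^8 + 685673814528*j^12*kk^9 + 35484997632*j^12*kk^10 + 939974656*j^12*kk^11 + 8998912*j^12*kk^12 + 234375604516768*j^13 + 767074347277344*j^13*kk + 1108092825040352*j^13*kk^2 + 928839591525168*j^13*kk^3 + 499408113999072*j^13*kk^4 + 179646545769168*j^13*kk^5 + 43729705453184*j^13*kk^6 + 7117728458944*j^13*kk^7 + 746694872576*j^13*kk^8 + 46965482496*j^13*kk^9 + 1540579328*j^13*kk^10 + 18980864*j^13*kk^11 + 58906501888944*j^14 + 175333240509504*j^14*kk + 227809370401520*j^14*kk^2 + 169398651994464*j^14*kk^3 + 79381991171008*j^14*kk^4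 + 24312733366784*j^14*kk^5 + 4879558389632*j^14*kk^6 + 625027302912*j^14*kk^7 + 47972242944*j^14*kk^8 + 1938841600*j^14*kk^9 + 30134272*j^14*kk^10 + 12056058068736*j^15 + 32395967280768*j^15*kk + 37499646819008*j^15*kk^2 + 24422757932160*j^15*kk^3 + 9799810647296*j^15*kk^4 + 2491099777728*j^15*kk^5 + 396549604864*j^15*kk^6 + 37517787136*j^15*kk^7 + 1872388096*j^15*kk^8 + 36405248*j^15*kk^9 + 1987182952704*j^16 + 4780162678784*j^16*kk + 4873161664512*j^16*kk^2 + 2734762922880*j^16*kk^3 + 917265805440*j^16*kk^4 + 186441979904*j^16*kk^5 + 22127200768*j^16*kk^6 + 1376321536*j^16*kk^7 + 33488896*j^16*kk^8 + 259514942976*j^17 + 553377820928*j^17*kk + 489773870080*j^17*kk^2 + 231688845056*j^17*kk^3 + 62713441792*j^17*kk^4 + 9599979520*j^17*kk^5 + 757473280*j^17*kk^6 + 23265280*j^17*kk^7 + 26209681152*j^18 + 48971298816*j^18*kk + 36934907904*j^18*kk^2 + 14268263424*j^18*kk^3 + 2944951552*j^18*kk^4 + 303587328*j^18*kk^5 + 11988992*j^18*kk^6 + 1972488192*j^19 + 3184749568*j^19*kk + 1995278848*j^19*kk^2 + 598343168*j^19*kk^3 + 84631552*j^19*kk^4 + 4440064*j^19*kk^5 + 104065024*j^20 + 142745600*j^20*kk + 71534592*j^20*kk^2 + 15138816*j^20*kk^3 + 1118208*j^20*kk^4 + 3432448*j^21 + 3915776*j^21*kk + 1474560*j^21*kk^2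 + 172032*j^21*kk^3 + 53248*j^22 + 49152*j^22*kk + 12288*j^22*kk^2" by simp
  have "(0::real) < real (17650087272000 + 131176669406400*kk + 459915055338960*kk^2 + 1011094693032528*kk^3 + 1562622542788104*kk^4 + 1803974325050312*kk^5 + 1613581552325636*kk^6 + 1144661076360520*kk^7 + 653828901918750*kk^8 + 303570609118202*kk^9 + 115154825455792*kk^10 + 35739506331001*kk^11 + 9056569124802*kk^12 + 1863098896305*kk^13 + 308030783024*kk^14 + 40291438712*kk^15 + 4071170848*kk^16 + 306220544*kk^17 + 16129024*kk^18 + 530432*kk^19 + 8192*kk^20 + 192102386594400*j + 1365881343023520*j*kk + 4569629439684024*j*kk^2 + 9558430529048808*j*kk^3 + 14009654510543312*j*kk^4 + 15282013923903044*j*kk^5 + 12861366624354182*j*kk^6 + 8542922795610930*j*kk^7 + 4543218017942382*j*kk^8 + 1950838562141125*j*kk^9 + 678929601608366*j*kk^10 + 191440534473785*j*kk^11 + 43543764977282*j*kk^12 + 7917103297584*j*kk^13 + 1133622225024*j*kk^14 + 124889253376*j*kk^15 + 10206243072*j*kk^16 + 582245376*j*kk^17 + 20680704*j*kk^18 + 344064*j*kk^19 + 981188420762160*j^2 + 6658624318339944*j^2*kk + 21201774360493716*j^2*kk^2 + 42074224479002544*j^2*kk^3 + 58295552034915266*j^2*kk^4 + 59867557124077224*j^2*kk^5 + 47213028187453236*j^2*kk^6 + 29226659981949114*j^2*kk^7 + 14393198374411171*j^2*kk^8 + 5679788377184450*j^2*kk^9 + 1799940976916542*j^2*kk^10 +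 456948252873064*j^2*kk^11 + 92245591622093*j^2*kk^12 + 14611470266300*j^2*kk^13 + 1777394522344*j^2*kk^14 + 160497164864*j^2*kk^15 + 10174290176*j^2*kk^16 + 409176064*j^2*kk^17 + 8321024*j^2*kk^18 + 32768*j^2*kk^19 + 3127822196316048*j^3 + 20208673798062804*j^3*kk + 61071121442551986*j^3*kk^2 + 114621978245801382*j^3*kk^3 + 149606241522993726*j^3*kk^4 + 144077305182791168*j^3*kk^5 + 105993318085665322*j^3*kk^6 + 60834631211107982*j^3*kk^7 + 27576740152785864*j^3*kk^8 + 9930314549163795*j^3*kk^9 + 2841391902263624*j^3*kk^10 + 642740163866487*j^3*kk^11 + 113667974330936*j^3*kk^12 + 15421229647832*j^3*kk^13 + 1557107565504*j^3*kk^14 + 111401809920*j^3*kk^15 + 5185080320*j^3*kk^16 + 132241408*j^3*kk^17 + 1146880*j^3*kk^18 + 6981640010363052*j^4 + 42830472901873122*j^4*kk + 122479195755455730*j^4*kk^2 + 216683221806701853*j^4*kk^3 + 265414851222852414*j^4*kk^4 + 238666747929770431*j^4*kk^5 + 162984163281239262*j^4*kk^6 + 86236899543186020*j^4*kk^7 + 35743212612816961*j^4*kk^8 + 11652095789808900*j^4*kk^9 + 2981471903210459*j^4*kk^10 + 593809596502200*j^4*kk^11 + 90606410775384*j^4*kk^12 + 10317927826256*j^4*kk^13 + 840627434272*j^4*kk^14 + 45651096192*j^4*kk^15 + 1450045952*j^4*kk^16 + 20129792*j^4*kk^17 + 49152*j^4*kk^18 + 11604317054529510*j^5 + 67401167651547021*j^5*kk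 + 181798376734872582*j^5*kk^2 + 302069990836126231*j^5*kk^3 + 345809422436571070*j^5*kk^4 + 288987187559796238*j^5*kk^5 + 182197089285193002*j^5*kk^6 + 88309836458213190*j^5*kk^7 + 33216949164065668*j^5*kk^8 + 9715056467337164*j^5*kk^9 + 2198523271313744*j^5*kk^10 + 380212893701668*j^5*kk^11 + 49160343050400*j^5*kk^12 + 4585491887808*j^5*kk^13 + 291037808896*j^5*kk^14 + 11355550720*j^5*kk^15 + 223313920*j^5*kk^16 + 1376256*j^5*kk^17 + 14911390311509817*j^6 + 81748302961612428*j^6*kk + 207255042619405580*j^6*kk^2 + 322156031200294287*j^6*kk^3 + 343139705848894473*j^6*kk^4 + 265116933585098312*j^6*kk^5 + 153387936215471966*j^6*kk^6 + 67623013992422975*j^6*kk^7 + 22888043037057118*j^6*kk^8 + 5944055057958128*j^6*kk^9 + 1174480546140024*j^6*kk^10 + 173492844051472*j^6*kk^11 + 18598825466368*j^6*kk^12 + 1378678691520*j^6*kk^13 + 65190310528*j^6*kk^14 + 1700791296*j^6*kk^15 + 18176000*j^6*kk^16 + 32768*j^6*kk^17 + 15180710106374160*j^7 + 78292871700152282*j^7*kk + 185873337560508032*j^7*kk^2 + 269126363484050097*j^7*kk^3 + 265393727011372872*j^7*kk^4 + 188490662900340447*j^7*kk^5 + 99404639467470276*j^7*kk^6 + 39541931373111714*j^7*kk^7 + 11926437097502064*j^7*kk^8 + 2717384411350240*j^7*kk^9 + 461714032580032*j^7*kk^10 + 57108142057264*j^7*kk^11 + 4940386309504*j^7*kk^12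 + 279993858688*j^7*kk^13 + 9298561024*j^7*kk^14 + 146995200*j^7*kk^15 + 688128*j^7*kk^16 + 12448393600436034*j^8 + 60180028659230042*j^8*kk + 133240400818287900*j^8*kk^2 + 178857547332310858*j^8*kk^3 + 162404454258879427*j^8*kk^4 + 105352641023344366*j^8*kk^5 + 50259130358553893*j^8*kk^6 + 17873716522590772*j^8*kk^7 + 4749858172967072*j^8*kk^8 + 936001100483024*j^8*kk^9 + 134245234177776*j^8*kk^10 + 13560696573248*j^8*kk^11 + 914094503680*j^8*kk^12 + 37599903232*j^8*kk^13 + 806669824*j^8*kk^14 + 6594560*j^8*kk^15 + 8192*j^8*kk^16 + 8314030207970634*j^9 + 37528810202835873*j^9*kk + 77141637182511786*j^9*kk^2 + 95506456976422404*j^9*kk^3 + 79365193715823792*j^9*kk^4 + 46685096577435279*j^9*kk^5 + 19971104191973544*j^9*kk^6 + 6281730372629384*j^9*kk^7 + 1451044366895392*j^9*kk^8 + 243013412578608*j^9*kk^9 + 28739881383552*j^9*kk^10 + 2294801676864*j^9*kk^11 + 114878831616*j^9*kk^12 + 3178257408*j^9*kk^13 + 38371328*j^9*kk^14 + 114688*j^9*kk^15 + 4555073476600617*j^10 + 19116692031275704*j^10*kk + 36301980040560974*j^10*kk^2 + 41212424151670454*j^10*kk^3 + 31127140320210615*j^10*kk^4 + 16465518207186120*j^10*kk^5 + 6251870518216968*j^10*kk^6 + 1717014716509744*j^10*kk^7 + 339064997805664*j^10*kk^8 + 47198243578944*j^10*kk^9 + 4462312002304*j^10*kk^10 + 269118902784*j^10*kk^11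 + 9310414080*j^10*kk^12 + 152207360*j^10*kk^13 + 757760*j^10*kk^14 + 2055417369941128*j^11 + 7982710639215116*j^11*kk + 13927577115444442*j^11*kk^2 + 14404164538961674*j^11*kk^3 + 9810257312664992*j^11*kk^4 + 4621423111069300*j^11*kk^5 + 1538477729424288*j^11*kk^6 + 363110250402960*j^11*kk^7 + 60008386869120*j^11*kk^8 + 6739913717952*j^11*kk^9 + 487635382272*j^11*kk^10 + 20724152832*j^11*kk^11 + 437141504*j^11*kk^12 + 3129344*j^11*kk^13 + 764836569590248*j^12 + 2734682156861504*j^12*kk + 4356735529992024*j^12*kk^2 + 4074187885896072*j^12*kk^3 + 2479138802822680*j^12*kk^4 + 1027964854590592*j^12*kk^5 + 295510724684240*j^12*kk^6 + 58726013355968*j^12*kk^7 + 7892980861312*j^12*kk^8 + 685673814528*j^12*kk^9 + 35484997632*j^12*kk^10 + 939974656*j^12*kk^11 + 8998912*j^12*kk^12 + 234375604516768*j^13 + 767074347277344*j^13*kk + 1108092825040352*j^13*kk^2 + 928839591525168*j^13*kk^3 + 499408113999072*j^13*kk^4 + 179646545769168*j^13*kk^5 + 43729705453184*j^13*kk^6 + 7117728458944*j^13*kk^7 + 746694872576*j^13*kk^8 + 46965482496*j^13*kk^9 + 1540579328*j^13*kk^10 + 18980864*j^13*kk^11 + 58906501888944*j^14 + 175333240509504*j^14*kk + 227809370401520*j^14*kk^2 + 169398651994464*j^14*kk^3 + 79381991171008*j^14*kk^4 + 24312733366784*j^14*kk^5 + 4879558389632*j^14*kk^6 + 625027302912*j^14*kk^7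 + 47972242944*j^14*kk^8 + 1938841600*j^14*kk^9 + 30134272*j^14*kk^10 + 12056058068736*j^15 + 32395967280768*j^15*kk + 37499646819008*j^15*kk^2 + 24422757932160*j^15*kk^3 + 9799810647296*j^15*kk^4 + 2491099777728*j^15*kk^5 + 396549604864*j^15*kk^6 + 37517787136*j^15*kk^7 + 1872388096*j^15*kk^8 + 36405248*j^15*kk^9 + 1987182952704*j^16 + 4780162678784*j^16*kk + 4873161664512*j^16*kk^2 + 2734762922880*j^16*kk^3 + 917265805440*j^16*kk^4 + 186441979904*j^16*kk^5 + 22127200768*j^16*kk^6 + 1376321536*j^16*kk^7 + 33488896*j^16*kk^8 + 259514942976*j^17 + 553377820928*j^17*kk + 489773870080*j^17*kk^2 + 231688845056*j^17*kk^3 + 62713441792*j^17*kk^4 + 9599979520*j^17*kk^5 + 757473280*j^17*kk^6 + 23265280*j^17*kk^7 + 26209681152*j^18 + 48971298816*j^18*kk + 36934907904*j^18*kk^2 + 14268263424*j^18*kk^3 + 2944951552*j^18*kk^4 + 303587328*j^18*kk^5 + 11988992*j^18*kk^6 + 1972488192*j^19 + 3184749568*j^19*kk + 1995278848*j^19*kk^2 + 598343168*j^19*kk^3 + 84631552*j^19*kk^4 + 4440064*j^19*kk^5 + 104065024*j^20 + 142745600*j^20*kk + 71534592*j^20*kk^2 + 15138816*j^20*kk^3 + 1118208*j^20*kk^4 + 3432448*j^21 + 3915776*j^21*kk + 1474560*j^21*kk^2 + 172032*j^21*kk^3 + 53248*j^22 + 49152*j^22*kk + 12288*j^22*kk^2)"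 using h by (simp only: of_nat_0_less_iff)
  then show ?thesis by (simp only: polyF1)
qed

lemma polyF2: "6*Fh0 (real j + 1) (real kk) + 3*Fh1 (real j + 1) (real kk) + 1*Fh2 (real j + 1) (real kk) = real (14651363851200 + 102597181904160*kk + 337952950127712*kk^2 + 695812635050616*kk^3 + 1003556842959420*kk^4 + 1076915129750232*kk^5 + 891351918431376*kk^6 + 582103154839590*kk^7 + 304264782992787*kk^8 + 128368331108634*kk^9 + 43878460627956*kk^10 + 12147222228993*kk^11 + 2711397079383*kk^12 + 483551047947*kk^13 + 67875063834*kk^14 + 7325814024*kk^15 + 586093632*kk^16 + 32704512*kk^17 + 1135104*kk^18 + 18432*kk^19 + 161289300245760*j + 1078780834319904*j*kk + 3384449275789584*j*kk^2 + 6615546961568400*j*kk^3 + 9025619249775804*j*kk^4 + 9123670910911200*j*kk^5 + 7079472934700262*j*kk^6 + 4309979991319476*j*kk^7 + 2086250507314728*j*kk^8 + 808638993646041*j*kk^9 + 251487116606256*j*kk^10 + 62584563619167*j*kk^11 + 12365890894050*j*kk^12 + 1913016287136*j*kk^13 + 226544295936*j*kk^14 + 19810337472*j*kk^15 + 1204255488*j*kk^16 + 45401088*j*kk^17 + 798720*j*kk^18 + 833344625790432*j^2 + 5310766290814056*j^2*kk + 15825782657651472*j^2*kk^2 + 29279853248236506*j^2*kk^3 + 37658771321264655*j^2*kk^4 + 35722699877838342*j^2*kk^5 + 25872437982268383*j^2*kk^6 + 14609737612112466*j^2*kk^7 + 6510450582837432*j^2*kk^8 + 2302180257213192*j^2*kk^9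 + 645927542974785*j^2*kk^10 + 142983887123406*j^2*kk^11 + 24673193875677*j^2*kk^12 + 3251852587092*j^2*kk^13 + 316706035416*j^2*kk^14 + 21576760512*j^2*kk^15 + 930718464*j^2*kk^16 + 20361216*j^2*kk^17 + 92160*j^2*kk^18 + 2687640933031488*j^3 + 16276703201874684*j^3*kk + 45936482119502508*j^3*kk^2 + 80180261799242562*j^3*kk^3 + 96861779681826918*j^3*kk^4 + 85862325260269296*j^3*kk^5 + 57767045184179214*j^3*kk^6 + 30089072953113570*j^3*kk^7 + 12263836022309604*j^3*kk^8 + 3925667359871889*j^3*kk^9 + 984265786195170*j^3*kk^10 + 191507966566617*j^3*kk^11 + 28416605787624*j^3*kk^12 + 3124034346600*j^3*kk^13 + 242646042432*j^3*kk^14 + 12257367552*j^3*kk^15 + 341449728*j^3*kk^16 + 3360768*j^3*kk^17 + 6070216280690844*j^4 + 34836620091794892*j^4*kk + 92820342336437898*j^4*kk^2 + 152308732578325581*j^4*kk^3 + 172133056187643258*j^4*kk^4 + 141942373783610829*j^4*kk^5 + 88247439076220661*j^4*kk^6 + 42141360615102834*j^4*kk^7 + 15597248838395013*j^4*kk^8 + 4480540871070066*j^4*kk^9 + 993228002349768*j^4*kk^10 + 167577811685136*j^4*kk^11 + 21003839993976*j^4*kk^12 + 1878893137392*j^4*kk^13 + 112124795232*j^4*kk^14 + 3942751104*j^4*kk^15 + 62151168*j^4*kk^16 + 178176*j^4*kk^17 + 10210599290768472*j^5 + 55360718488222371*j^5*kk + 138787344324522702*j^5*kk^2 + 213276442360922055*j^5*kk^3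 + 224519309223520872*j^5*kk^4 + 171373934061439326*j^5*kk^5 + 97894205121400500*j^5*kk^6 + 42572146836288330*j^5*kk^7 + 14194484716720662*j^5*kk^8 + 3624040471585530*j^5*kk^9 + 701787223201488*j^5*kk^10 + 101101603434828*j^5*kk^11 + 10484410429152*j^5*kk^12 + 740953527360*j^5*kk^13 + 32442680064*j^5*kk^14 + 730358784*j^5*kk^15 + 5308416*j^5*kk^16 + 13280462884756116*j^6 + 67805105866784712*j^6*kk + 159351858061066038*j^6*kk^2 + 228380868579417405*j^6*kk^3 + 222889727670640458*j^6*kk^4 + 156626919809216172*j^6*kk^5 + 81688455991164606*j^6*kk^6 + 32111733408250941*j^6*kk^7 + 9559740113161812*j^6*kk^8 + 2145752378556816*j^6*kk^9 + 358044165647448*j^6*kk^10 + 43262856473232*j^6*kk^11 + 3622122755520*j^6*kk^12 + 195049653312*j^6*kk^13 + 5901473664*j^6*kk^14 + 75260928*j^6*kk^15 + 165888*j^6*kk^16 + 13688147346702390*j^7 + 65578091800199640*j^7*kk + 143903522685485016*j^7*kk^2 + 191479361862785847*j^7*kk^3 + 172356490795834896*j^7*kk^4 + 110839951057912785*j^7*kk^5 + 52413162214519446*j^7*kk^6 + 18470493373936884*j^7*kk^7 + 4860663904189104*j^7*kk^8 + 947317338495000*j^7*kk^9 + 134060099993760*j^7*kk^10 + 13301326892304*j^7*kk^11 + 872434535040*j^7*kk^12 + 34159262592*j^7*kk^13 + 656277504*j^7*kk^14 + 3876864*j^7*kk^15 + 11366786411358228*j^8 + 50904331087927104*j^8*kk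 + 103849487433067506*j^8*kk^2 + 127661013096367722*j^8*kk^3 + 105383356845051027*j^8*kk^4 + 61611673775494164*j^8*kk^5 + 26210315566619697*j^8*kk^6 + 8203230179364132*j^8*kk^7 + 1886500272496728*j^8*kk^8 + 314657421385968*j^8*kk^9 + 37054923316848*j^8*kk^10 + 2940762121536*j^8*kk^11 + 145310369280*j^8*kk^12 + 3875916288*j^8*kk^13 + 41551872*j^8*kk^14 + 73728*j^8*kk^15 + 7690363124506236*j^9 + 32059689101793807*j^9*kk + 60518827141737678*j^9*kk^2 + 68358232069994388*j^9*kk^3 + 51425858843811882*j^9*kk^4 + 27132445055020593*j^9*kk^5 + 10292904048646968*j^9*kk^6 + 2830503647858568*j^9*kk^7 + 561247491370560*j^9*kk^8 + 78730761759408*j^9*kk^9 + 7534480792704*j^9*kk^10 + 462104337600*j^9*kk^11 + 16289796096*j^9*kk^12 + 268459008*j^9*kk^13 + 1277952*j^9*kk^14 + 4269819952675908*j^10 + 16494663274468284*j^10*kk + 28661492774936382*j^10*kk^2 + 29569086316947378*j^10*kk^3 + 20130518674012284*j^10*kk^4 + 9504986746708872*j^10*kk^5 + 3183003717958752*j^10*kk^6 + 759427959284112*j^10*kk^7 + 127735662012624*j^10*kk^8 + 14741917740480*j^10*kk^9 + 1110985984512*j^10*kk^10 + 50171785728*j^10*kk^11 + 1162225920*j^10*kk^12 + 10027008*j^10*kk^13 + 12288*j^10*kk^14 + 1953411679744902*j^11 + 6957978639271362*j^11*kk + 11065432572795480*j^11*kk^2 + 10357074468182028*j^11*kk^3 +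 6330394770081360*j^11*kk^4 + 2649342095577252*j^11*kk^5 + 773854931161824*j^11*kk^6 + 157736499232368*j^11*kk^7 + 22043374946688*j^11*kk^8 + 2032234994880*j^11*kk^9 + 115332172800*j^11*kk^10 + 3561257472*j^11*kk^11 + 47087616*j^11*kk^12 + 147456*j^11*kk^13 + 737356715185368*j^12 + 2408423819245968*j^12*kk + 3483152001706680*j^12*kk^2 + 2935550206789704*j^12*kk^3 + 1596219464285208*j^12*kk^4 + 585428796739200*j^12*kk^5 + 146982316821216*j^12*kk^6 + 25094833096896*j^12*kk^7 + 2833192811904*j^12*kk^8 + 199994575872*j^12*kk^9 + 7972856064*j^12*kk^10 + 147849216*j^12*kk^11 + 811008*j^12*kk^12 + 229354787362272*j^13 + 682773960526080*j^13*kk + 891567395458752*j^13*kk^2 + 670755850808688*j^13*kk^3 + 321000985353024*j^13*kk^4 + 101747427947952*j^13*kk^5 + 21548257229184*j^13*kk^6 + 3000015986496*j^13*kk^7 + 262716799488*j^13*kk^8 + 13282286592*j^13*kk^9 + 328507392*j^13*kk^10 + 2703360*j^13*kk^11 + 58553036311536*j^14 + 157785817493760*j^14*kk + 184520550335280*j^14*kk^2 + 122677267755744*j^14*kk^3 + 50999281610400*j^14*kk^4 + 13723845251328*j^14*kk^5 + 2389576411008*j^14*kk^6 + 260845499904*j^14*kk^7 + 16606328064*j^14*kk^8 + 532758528*j^14*kk^9 + 6082560*j^14*kk^10 + 12181860053568*j^15 + 29487669639744*j^15*kk + 30594411698688*j^15*kk^2 + 17758568969664*j^15*kk^3 + 6307245928704*j^15*kk^4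 + 1406369267904*j^15*kk^5 + 193876666368*j^15*kk^6 + 15579474432*j^15*kk^7 + 640253952*j^15*kk^8 + 9732096*j^15*kk^9 + 2042749453824*j^16 + 4402991099136*j^16*kk + 4008604787712*j^16*kk^2 + 2000952593280*j^16*kk^3 + 593653752192*j^16*kk^4 + 105829240320*j^16*kk^5 + 10866306816*j^16*kk^6 + 571908096*j^16*kk^7 + 11354112*j^16*kk^8 + 271615034880*j^17 + 516077227776*j^17*kk + 406867212288*j^17*kk^2 + 171201198336*j^17*kk^3 + 41053506048*j^17*kk^4 + 5519324160*j^17*kk^5 + 376455168*j^17*kk^6 + 9732096*j^17*kk^7 + 27950372352*j^18 + 46266562560*j^18*kk + 31070161920*j^18*kk^2 + 10710865920*j^18*kk^3 + 1966901760*j^18*kk^4 + 178520064*j^18*kk^5 + 6082560*j^18*kk^6 + 2144577024*j^19 + 3049843200*j^19*kk + 1707546624*j^19*kk^2 + 460670976*j^19*kk^3 + 58392576*j^19*kk^4 + 2703360*j^19*kk^5 + 115402752*j^20 + 138633216*j^20*kk + 62810112*j^20*kk^2 + 12140544*j^20*kk^3 + 811008*j^20*kk^4 + 3883008*j^21 + 3858432*j^21*kk + 1351680*j^21*kk^2 + 147456*j^21*kk^3 + 61440*j^22 + 49152*j^22*kk + 12288*j^22*kk^2)"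
  unfolding pdefs by (simp only: of_nat_add of_nat_mult of_nat_power of_nat_numeral of_nat_1) algebra

lemma polyF2_pos: "0 < 6*Fh0 (real j + 1) (real kk) + 3*Fh1 (real j + 1) (real kk) + 1*Fh2 (real j + 1) (real kk)"
proof -
  have h: "(0::nat) < 14651363851200 + 102597181904160*kk + 337952950127712*kk^2 + 695812635050616*kk^3 + 1003556842959420*kk^4 + 1076915129750232*kk^5 + 891351918431376*kk^6 + 582103154839590*kk^7 + 304264782992787*kk^8 + 128368331108634*kk^9 + 43878460627956*kk^10 + 12147222228993*kk^11 + 2711397079383*kk^12 + 483551047947*kk^13 + 67875063834*kk^14 + 7325814024*kk^15 + 586093632*kk^16 + 32704512*kk^17 + 1135104*kk^18 + 18432*kk^19 + 161289300245760*j + 1078780834319904*j*kk + 3384449275789584*j*kk^2 + 6615546961568400*j*kk^3 + 9025619249775804*j*kk^4 + 9123670910911200*j*kk^5 + 7079472934700262*j*kk^6 + 4309979991319476*j*kk^7 + 2086250507314728*j*kk^8 + 808638993646041*j*kk^9 + 251487116606256*j*kk^10 + 62584563619167*j*kk^11 + 12365890894050*j*kk^12 + 1913016287136*j*kk^13 + 226544295936*j*kk^14 + 19810337472*j*kk^15 + 1204255488*j*kk^16 + 45401088*j*kk^17 + 798720*j*kk^18 + 833344625790432*j^2 + 5310766290814056*j^2*kk + 15825782657651472*j^2*kk^2 + 29279853248236506*j^2*kk^3 + 37658771321264655*j^2*kk^4 + 35722699877838342*j^2*kk^5 + 25872437982268383*j^2*kk^6 + 14609737612112466*j^2*kk^7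 + 6510450582837432*j^2*kk^8 + 2302180257213192*j^2*kk^9 + 645927542974785*j^2*kk^10 + 142983887123406*j^2*kk^11 + 24673193875677*j^2*kk^12 + 3251852587092*j^2*kk^13 + 316706035416*j^2*kk^14 + 21576760512*j^2*kk^15 + 930718464*j^2*kk^16 + 20361216*j^2*kk^17 + 92160*j^2*kk^18 + 2687640933031488*j^3 + 16276703201874684*j^3*kk + 45936482119502508*j^3*kk^2 + 80180261799242562*j^3*kk^3 + 96861779681826918*j^3*kk^4 + 85862325260269296*j^3*kk^5 + 57767045184179214*j^3*kk^6 + 30089072953113570*j^3*kk^7 + 12263836022309604*j^3*kk^8 + 3925667359871889*j^3*kk^9 + 984265786195170*j^3*kk^10 + 191507966566617*j^3*kk^11 + 28416605787624*j^3*kk^12 + 3124034346600*j^3*kk^13 + 242646042432*j^3*kk^14 + 12257367552*j^3*kk^15 + 341449728*j^3*kk^16 + 3360768*j^3*kk^17 + 6070216280690844*j^4 + 34836620091794892*j^4*kk + 92820342336437898*j^4*kk^2 + 152308732578325581*j^4*kk^3 + 172133056187643258*j^4*kk^4 + 141942373783610829*j^4*kk^5 + 88247439076220661*j^4*kk^6 + 42141360615102834*j^4*kk^7 + 15597248838395013*j^4*kk^8 + 4480540871070066*j^4*kk^9 + 993228002349768*j^4*kk^10 + 167577811685136*j^4*kk^11 + 21003839993976*j^4*kk^12 + 1878893137392*j^4*kk^13 + 112124795232*j^4*kk^14 + 3942751104*j^4*kk^15 + 62151168*j^4*kk^16 + 178176*j^4*kk^17 + 10210599290768472*j^5 + 55360718488222371*j^5*kk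 + 138787344324522702*j^5*kk^2 + 213276442360922055*j^5*kk^3 + 224519309223520872*j^5*kk^4 + 171373934061439326*j^5*kk^5 + 97894205121400500*j^5*kk^6 + 42572146836288330*j^5*kk^7 + 14194484716720662*j^5*kk^8 + 3624040471585530*j^5*kk^9 + 701787223201488*j^5*kk^10 + 101101603434828*j^5*kk^11 + 10484410429152*j^5*kk^12 + 740953527360*j^5*kk^13 + 32442680064*j^5*kk^14 + 730358784*j^5*kk^15 + 5308416*j^5*kk^16 + 13280462884756116*j^6 + 67805105866784712*j^6*kk + 159351858061066038*j^6*kk^2 + 228380868579417405*j^6*kk^3 + 222889727670640458*j^6*kk^4 + 156626919809216172*j^6*kk^5 + 81688455991164606*j^6*kk^6 + 32111733408250941*j^6*kk^7 + 9559740113161812*j^6*kk^8 + 2145752378556816*j^6*kk^9 + 358044165647448*j^6*kk^10 + 43262856473232*j^6*kk^11 + 3622122755520*j^6*kk^12 + 195049653312*j^6*kk^13 + 5901473664*j^6*kk^14 + 75260928*j^6*kk^15 + 165888*j^6*kk^16 + 13688147346702390*j^7 + 65578091800199640*j^7*kk + 143903522685485016*j^7*kk^2 + 191479361862785847*j^7*kk^3 + 172356490795834896*j^7*kk^4 + 110839951057912785*j^7*kk^5 + 52413162214519446*j^7*kk^6 + 18470493373936884*j^7*kk^7 + 4860663904189104*j^7*kk^8 + 947317338495000*j^7*kk^9 + 134060099993760*j^7*kk^10 + 13301326892304*j^7*kk^11 + 872434535040*j^7*kk^12 + 34159262592*j^7*kk^13 + 656277504*j^7*kk^14 + 3876864*j^7*kk^15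 + 11366786411358228*j^8 + 50904331087927104*j^8*kk + 103849487433067506*j^8*kk^2 + 127661013096367722*j^8*kk^3 + 105383356845051027*j^8*kk^4 + 61611673775494164*j^8*kk^5 + 26210315566619697*j^8*kk^6 + 8203230179364132*j^8*kk^7 + 1886500272496728*j^8*kk^8 + 314657421385968*j^8*kk^9 + 37054923316848*j^8*kk^10 + 2940762121536*j^8*kk^11 + 145310369280*j^8*kk^12 + 3875916288*j^8*kk^13 + 41551872*j^8*kk^14 + 73728*j^8*kk^15 + 7690363124506236*j^9 + 32059689101793807*j^9*kk + 60518827141737678*j^9*kk^2 + 68358232069994388*j^9*kk^3 + 51425858843811882*j^9*kk^4 + 27132445055020593*j^9*kk^5 + 10292904048646968*j^9*kk^6 + 2830503647858568*j^9*kk^7 + 561247491370560*j^9*kk^8 + 78730761759408*j^9*kk^9 + 7534480792704*j^9*kk^10 + 462104337600*j^9*kk^11 + 16289796096*j^9*kk^12 + 268459008*j^9*kk^13 + 1277952*j^9*kk^14 + 4269819952675908*j^10 + 16494663274468284*j^10*kk + 28661492774936382*j^10*kk^2 + 29569086316947378*j^10*kk^3 + 20130518674012284*j^10*kk^4 + 9504986746708872*j^10*kk^5 + 3183003717958752*j^10*kk^6 + 759427959284112*j^10*kk^7 + 127735662012624*j^10*kk^8 + 14741917740480*j^10*kk^9 + 1110985984512*j^10*kk^10 + 50171785728*j^10*kk^11 + 1162225920*j^10*kk^12 + 10027008*j^10*kk^13 + 12288*j^10*kk^14 + 1953411679744902*j^11 + 6957978639271362*j^11*kk + 11065432572795480*j^11*kk^2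 + 10357074468182028*j^11*kk^3 + 6330394770081360*j^11*kk^4 + 2649342095577252*j^11*kk^5 + 773854931161824*j^11*kk^6 + 157736499232368*j^11*kk^7 + 22043374946688*j^11*kk^8 + 2032234994880*j^11*kk^9 + 115332172800*j^11*kk^10 + 3561257472*j^11*kk^11 + 47087616*j^11*kk^12 + 147456*j^11*kk^13 + 737356715185368*j^12 + 2408423819245968*j^12*kk + 3483152001706680*j^12*kk^2 + 2935550206789704*j^12*kk^3 + 1596219464285208*j^12*kk^4 + 585428796739200*j^12*kk^5 + 146982316821216*j^12*kk^6 + 25094833096896*j^12*kk^7 + 2833192811904*j^12*kk^8 + 199994575872*j^12*kk^9 + 7972856064*j^12*kk^10 + 147849216*j^12*kk^11 + 811008*j^12*kk^12 + 229354787362272*j^13 + 682773960526080*j^13*kk + 891567395458752*j^13*kk^2 + 670755850808688*j^13*kk^3 + 321000985353024*j^13*kk^4 + 101747427947952*j^13*kk^5 + 21548257229184*j^13*kk^6 + 3000015986496*j^13*kk^7 + 262716799488*j^13*kk^8 + 13282286592*j^13*kk^9 + 328507392*j^13*kk^10 + 2703360*j^13*kk^11 + 58553036311536*j^14 + 157785817493760*j^14*kk + 184520550335280*j^14*kk^2 + 122677267755744*j^14*kk^3 + 50999281610400*j^14*kk^4 + 13723845251328*j^14*kk^5 + 2389576411008*j^14*kk^6 + 260845499904*j^14*kk^7 + 16606328064*j^14*kk^8 + 532758528*j^14*kk^9 + 6082560*j^14*kk^10 + 12181860053568*j^15 + 29487669639744*j^15*kk + 30594411698688*j^15*kk^2 +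 17758568969664*j^15*kk^3 + 6307245928704*j^15*kk^4 + 1406369267904*j^15*kk^5 + 193876666368*j^15*kk^6 + 15579474432*j^15*kk^7 + 640253952*j^15*kk^8 + 9732096*j^15*kk^9 + 2042749453824*j^16 + 4402991099136*j^16*kk + 4008604787712*j^16*kk^2 + 2000952593280*j^16*kk^3 + 593653752192*j^16*kk^4 + 105829240320*j^16*kk^5 + 10866306816*j^16*kk^6 + 571908096*j^16*kk^7 + 11354112*j^16*kk^8 + 271615034880*j^17 + 516077227776*j^17*kk + 406867212288*j^17*kk^2 + 171201198336*j^17*kk^3 + 41053506048*j^17*kk^4 + 5519324160*j^17*kk^5 + 376455168*j^17*kk^6 + 9732096*j^17*kk^7 + 27950372352*j^18 + 46266562560*j^18*kk + 31070161920*j^18*kk^2 + 10710865920*j^18*kk^3 + 1966901760*j^18*kk^4 + 178520064*j^18*kk^5 + 6082560*j^18*kk^6 + 2144577024*j^19 + 3049843200*j^19*kk + 1707546624*j^19*kk^2 + 460670976*j^19*kk^3 + 58392576*j^19*kk^4 + 2703360*j^19*kk^5 + 115402752*j^20 + 138633216*j^20*kk + 62810112*j^20*kk^2 + 12140544*j^20*kk^3 + 811008*j^20*kk^4 + 3883008*j^21 + 3858432*j^21*kk + 1351680*j^21*kk^2 + 147456*j^21*kk^3 + 61440*j^22 + 49152*j^22*kk + 12288*j^22*kk^2" by simp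
  have "(0::real) < real (14651363851200 + 102597181904160*kk + 337952950127712*kk^2 + 695812635050616*kk^3 + 1003556842959420*kk^4 + 1076915129750232*kk^5 + 891351918431376*kk^6 + 582103154839590*kk^7 + 304264782992787*kk^8 + 128368331108634*kk^9 + 43878460627956*kk^10 + 12147222228993*kk^11 + 2711397079383*kk^12 + 483551047947*kk^13 + 67875063834*kk^14 + 7325814024*kk^15 + 586093632*kk^16 + 32704512*kk^17 + 1135104*kk^18 + 18432*kk^19 + 161289300245760*j + 1078780834319904*j*kk + 3384449275789584*j*kk^2 + 6615546961568400*j*kk^3 + 9025619249775804*j*kk^4 + 9123670910911200*j*kk^5 + 7079472934700262*j*kk^6 + 4309979991319476*j*kk^7 + 2086250507314728*j*kk^8 + 808638993646041*j*kk^9 + 251487116606256*j*kk^10 + 62584563619167*j*kk^11 + 12365890894050*j*kk^12 + 1913016287136*j*kk^13 + 226544295936*j*kk^14 + 19810337472*j*kk^15 + 1204255488*j*kk^16 + 45401088*j*kk^17 + 798720*j*kk^18 + 833344625790432*j^2 + 5310766290814056*j^2*kk + 15825782657651472*j^2*kk^2 + 29279853248236506*j^2*kk^3 + 37658771321264655*j^2*kk^4 + 35722699877838342*j^2*kk^5 + 25872437982268383*j^2*kk^6 + 14609737612112466*j^2*kk^7 + 6510450582837432*j^2*kk^8 + 2302180257213192*j^2*kk^9 + 645927542974785*j^2*kk^10 + 142983887123406*j^2*kk^11 + 24673193875677*j^2*kk^12 + 3251852587092*j^2*kk^13 + 316706035416*j^2*kk^14 + 21576760512*j^2*kk^15 +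 930718464*j^2*kk^16 + 20361216*j^2*kk^17 + 92160*j^2*kk^18 + 2687640933031488*j^3 + 16276703201874684*j^3*kk + 45936482119502508*j^3*kk^2 + 80180261799242562*j^3*kk^3 + 96861779681826918*j^3*kk^4 + 85862325260269296*j^3*kk^5 + 57767045184179214*j^3*kk^6 + 30089072953113570*j^3*kk^7 + 12263836022309604*j^3*kk^8 + 3925667359871889*j^3*kk^9 + 984265786195170*j^3*kk^10 + 191507966566617*j^3*kk^11 + 28416605787624*j^3*kk^12 + 3124034346600*j^3*kk^13 + 242646042432*j^3*kk^14 + 12257367552*j^3*kk^15 + 341449728*j^3*kk^16 + 3360768*j^3*kk^17 + 6070216280690844*j^4 + 34836620091794892*j^4*kk + 92820342336437898*j^4*kk^2 + 152308732578325581*j^4*kk^3 + 172133056187643258*j^4*kk^4 + 141942373783610829*j^4*kk^5 + 88247439076220661*j^4*kk^6 + 42141360615102834*j^4*kk^7 + 15597248838395013*j^4*kk^8 + 4480540871070066*j^4*kk^9 + 993228002349768*j^4*kk^10 + 167577811685136*j^4*kk^11 + 21003839993976*j^4*kk^12 + 1878893137392*j^4*kk^13 + 112124795232*j^4*kk^14 + 3942751104*j^4*kk^15 + 62151168*j^4*kk^16 + 178176*j^4*kk^17 + 10210599290768472*j^5 + 55360718488222371*j^5*kk + 138787344324522702*j^5*kk^2 + 213276442360922055*j^5*kk^3 + 224519309223520872*j^5*kk^4 + 171373934061439326*j^5*kk^5 + 97894205121400500*j^5*kk^6 + 42572146836288330*j^5*kk^7 + 14194484716720662*j^5*kk^8 +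 3624040471585530*j^5*kk^9 + 701787223201488*j^5*kk^10 + 101101603434828*j^5*kk^11 + 10484410429152*j^5*kk^12 + 740953527360*j^5*kk^13 + 32442680064*j^5*kk^14 + 730358784*j^5*kk^15 + 5308416*j^5*kk^16 + 13280462884756116*j^6 + 67805105866784712*j^6*kk + 159351858061066038*j^6*kk^2 + 228380868579417405*j^6*kk^3 + 222889727670640458*j^6*kk^4 + 156626919809216172*j^6*kk^5 + 81688455991164606*j^6*kk^6 + 32111733408250941*j^6*kk^7 + 9559740113161812*j^6*kk^8 + 2145752378556816*j^6*kk^9 + 358044165647448*j^6*kk^10 + 43262856473232*j^6*kk^11 + 3622122755520*j^6*kk^12 + 195049653312*j^6*kk^13 + 5901473664*j^6*kk^14 + 75260928*j^6*kk^15 + 165888*j^6*kk^16 + 13688147346702390*j^7 + 65578091800199640*j^7*kk + 143903522685485016*j^7*kk^2 + 191479361862785847*j^7*kk^3 + 172356490795834896*j^7*kk^4 + 110839951057912785*j^7*kk^5 + 52413162214519446*j^7*kk^6 + 18470493373936884*j^7*kk^7 + 4860663904189104*j^7*kk^8 + 947317338495000*j^7*kk^9 + 134060099993760*j^7*kk^10 + 13301326892304*j^7*kk^11 + 872434535040*j^7*kk^12 + 34159262592*j^7*kk^13 + 656277504*j^7*kk^14 + 3876864*j^7*kk^15 + 11366786411358228*j^8 + 50904331087927104*j^8*kk + 103849487433067506*j^8*kk^2 + 127661013096367722*j^8*kk^3 + 105383356845051027*j^8*kk^4 + 61611673775494164*j^8*kk^5 + 26210315566619697*j^8*kk^6 +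 8203230179364132*j^8*kk^7 + 1886500272496728*j^8*kk^8 + 314657421385968*j^8*kk^9 + 37054923316848*j^8*kk^10 + 2940762121536*j^8*kk^11 + 145310369280*j^8*kk^12 + 3875916288*j^8*kk^13 + 41551872*j^8*kk^14 + 73728*j^8*kk^15 + 7690363124506236*j^9 + 32059689101793807*j^9*kk + 60518827141737678*j^9*kk^2 + 68358232069994388*j^9*kk^3 + 51425858843811882*j^9*kk^4 + 27132445055020593*j^9*kk^5 + 10292904048646968*j^9*kk^6 + 2830503647858568*j^9*kk^7 + 561247491370560*j^9*kk^8 + 78730761759408*j^9*kk^9 + 7534480792704*j^9*kk^10 + 462104337600*j^9*kk^11 + 16289796096*j^9*kk^12 + 268459008*j^9*kk^13 + 1277952*j^9*kk^14 + 4269819952675908*j^10 + 16494663274468284*j^10*kk + 28661492774936382*j^10*kk^2 + 29569086316947378*j^10*kk^3 + 20130518674012284*j^10*kk^4 + 9504986746708872*j^10*kk^5 + 3183003717958752*j^10*kk^6 + 759427959284112*j^10*kk^7 + 127735662012624*j^10*kk^8 + 14741917740480*j^10*kk^9 + 1110985984512*j^10*kk^10 + 50171785728*j^10*kk^11 + 1162225920*j^10*kk^12 + 10027008*j^10*kk^13 + 12288*j^10*kk^14 + 1953411679744902*j^11 + 6957978639271362*j^11*kk + 11065432572795480*j^11*kk^2 + 10357074468182028*j^11*kk^3 + 6330394770081360*j^11*kk^4 + 2649342095577252*j^11*kk^5 + 773854931161824*j^11*kk^6 + 157736499232368*j^11*kk^7 + 22043374946688*j^11*kk^8 + 2032234994880*j^11*kk^9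 + 115332172800*j^11*kk^10 + 3561257472*j^11*kk^11 + 47087616*j^11*kk^12 + 147456*j^11*kk^13 + 737356715185368*j^12 + 2408423819245968*j^12*kk + 3483152001706680*j^12*kk^2 + 2935550206789704*j^12*kk^3 + 1596219464285208*j^12*kk^4 + 585428796739200*j^12*kk^5 + 146982316821216*j^12*kk^6 + 25094833096896*j^12*kk^7 + 2833192811904*j^12*kk^8 + 199994575872*j^12*kk^9 + 7972856064*j^12*kk^10 + 147849216*j^12*kk^11 + 811008*j^12*kk^12 + 229354787362272*j^13 + 682773960526080*j^13*kk + 891567395458752*j^13*kk^2 + 670755850808688*j^13*kk^3 + 321000985353024*j^13*kk^4 + 101747427947952*j^13*kk^5 + 21548257229184*j^13*kk^6 + 3000015986496*j^13*kk^7 + 262716799488*j^13*kk^8 + 13282286592*j^13*kk^9 + 328507392*j^13*kk^10 + 2703360*j^13*kk^11 + 58553036311536*j^14 + 157785817493760*j^14*kk + 184520550335280*j^14*kk^2 + 122677267755744*j^14*kk^3 + 50999281610400*j^14*kk^4 + 13723845251328*j^14*kk^5 + 2389576411008*j^14*kk^6 + 260845499904*j^14*kk^7 + 16606328064*j^14*kk^8 + 532758528*j^14*kk^9 + 6082560*j^14*kk^10 + 12181860053568*j^15 + 29487669639744*j^15*kk + 30594411698688*j^15*kk^2 + 17758568969664*j^15*kk^3 + 6307245928704*j^15*kk^4 + 1406369267904*j^15*kk^5 + 193876666368*j^15*kk^6 + 15579474432*j^15*kk^7 + 640253952*j^15*kk^8 + 9732096*j^15*kk^9 + 2042749453824*j^16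 + 4402991099136*j^16*kk + 4008604787712*j^16*kk^2 + 2000952593280*j^16*kk^3 + 593653752192*j^16*kk^4 + 105829240320*j^16*kk^5 + 10866306816*j^16*kk^6 + 571908096*j^16*kk^7 + 11354112*j^16*kk^8 + 271615034880*j^17 + 516077227776*j^17*kk + 406867212288*j^17*kk^2 + 171201198336*j^17*kk^3 + 41053506048*j^17*kk^4 + 5519324160*j^17*kk^5 + 376455168*j^17*kk^6 + 9732096*j^17*kk^7 + 27950372352*j^18 + 46266562560*j^18*kk + 31070161920*j^18*kk^2 + 10710865920*j^18*kk^3 + 1966901760*j^18*kk^4 + 178520064*j^18*kk^5 + 6082560*j^18*kk^6 + 2144577024*j^19 + 3049843200*j^19*kk + 1707546624*j^19*kk^2 + 460670976*j^19*kk^3 + 58392576*j^19*kk^4 + 2703360*j^19*kk^5 + 115402752*j^20 + 138633216*j^20*kk + 62810112*j^20*kk^2 + 12140544*j^20*kk^3 + 811008*j^20*kk^4 + 3883008*j^21 + 3858432*j^21*kk + 1351680*j^21*kk^2 + 147456*j^21*kk^3 + 61440*j^22 + 49152*j^22*kk + 12288*j^22*kk^2)" using h by (simp only: of_nat_0_less_iff)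
  then show ?thesis by (simp only: polyF2)
qed

lemma polyF3: "4*Fh0 (real j + 1) (real kk) + 3*Fh1 (real j + 1) (real kk) + 2*Fh2 (real j + 1) (real kk) + 1*Fh3 (real j + 1) (real kk) = real (5378837970240 + 35302602218976*kk + 108607134968208*kk^2 + 208024141615632*kk^3 + 277875623152800*kk^4 + 274773641068050*kk^5 + 208350528007902*kk^6 + 123809304837309*kk^7 + 58419082342758*kk^8 + 22039341755955*kk^9 + 6659942608830*kk^10 + 1607270499666*kk^11 + 307301578950*kk^12 + 45889921968*kk^13 + 5231721660*kk^14 + 439145280*kk^15 + 25544832*kk^16 + 918528*kk^17 + 15360*kk^18 + 60116586604416*j + 376485070180752*j*kk + 1101849237126360*j*kk^2 + 2000815707019824*j*kk^3 + 2523819973219638*j*kk^4 + 2345889957389487*j*kk^5 + 1663092327001016*j*kk^6 + 918095732686337*j*kk^7 + 399349979854240*j*kk^8 + 137579533174844*j*kk^9 + 37518054496808*j*kk^10 + 8047816229472*j*kk^11 + 1340436683366*j*kk^12 + 169613882744*j*kk^13 + 15736062256*j*kk^14 + 1008030656*j*kk^15 + 39785216*j*kk^16 + 728064*j*kk^17 + 315144441406368*j^2 + 1878124582633752*j^2*kk + 5213372767417116*j^2*kk^2 + 8944944930754704*j^2*kk^3 + 10614615962779737*j^2*kk^4 + 9234516746419798*j^2*kk^5 + 6090704033410452*j^2*kk^6 + 3105626030766004*j^2*kk^7 + 1236820020834911*j^2*kk^8 + 385882790633028*j^2*kk^9 + 93985136326010*j^2*kk^10 + 17681383162642*j^2*kk^11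 + 2519779657806*j^2*kk^12 + 263315845576*j^2*kk^13 + 19102488176*j^2*kk^14 + 870256320*j^2*kk^15 + 19881728*j^2*kk^16 + 89088*j^2*kk^17 + 1030537096907616*j^3 + 5827329893626236*j^3*kk + 15292161502103898*j^3*kk^2 + 24700968728763246*j^3*kk^3 + 27461188893368330*j^3*kk^4 + 22255439330638241*j^3*kk^5 + 13581800611077586*j^3*kk^6 + 6355598639257007*j^3*kk^7 + 2299652962660368*j^3*kk^8 + 643669951308460*j^3*kk^9 + 138361105870032*j^3*kk^10 + 22475692243208*j^3*kk^11 + 2682234787648*j^3*kk^12 + 224240839232*j^3*kk^13 + 12076304832*j^3*kk^14 + 353731072*j^3*kk^15 + 3533824*j^3*kk^16 + 2358379801637172*j^4 + 12613498877874420*j^4*kk + 31181813543822652*j^4*kk^2 + 47227962436308600*j^4*kk^3 + 48968015851631877*j^4*kk^4 + 36776602388234499*j^4*kk^5 + 20640684708179023*j^4*kk^6 + 8800791323008316*j^4*kk^7 + 2868219877711212*j^4*kk^8 + 712539609944648*j^4*kk^9 + 133339545940390*j^4*kk^10 + 18364491827583*j^4*kk^11 + 1788715660660*j^4*kk^12 + 115039507160*j^4*kk^13 + 4299548448*j^4*kk^14 + 70283648*j^4*kk^15 + 205312*j^4*kk^16 + 4016913766587360*j^5 + 20250637275332700*j^5*kk + 46978198296474708*j^5*kk^2 + 66428099592869081*j^5*kk^3 + 63915825344231378*j^5*kk^4 + 44229210316025368*j^5*kk^5 + 22675903683335898*j^5*kk^6 + 8739229830932406*j^5*kk^7 + 2540430683173714*j^5*kk^8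 + 553354065479165*j^5*kk^9 + 88737903777734*j^5*kk^10 + 10143843693400*j^5*kk^11 + 782094134208*j^5*kk^12 + 36883759296*j^5*kk^13 + 878200576*j^5*kk^14 + 6641664*j^5*kk^15 + 5287027657409964*j^6 + 25030042348911408*j^6*kk + 54260605502060013*j^6*kk^2 + 71288943819040842*j^6*kk^3 + 63305316562223199*j^6*kk^4 + 40106697446371121*j^6*kk^5 + 18643066790287556*j^6*kk^6 + 6436223458167600*j^6*kk^7 + 1650527010167089*j^6*kk^8 + 310876349806279*j^6*kk^9 + 41954256098337*j^6*kk^10 + 3882945115556*j^6*kk^11 + 228534861464*j^6*kk^12 + 7455245376*j^6*kk^13 + 101266816*j^6*kk^14 + 237568*j^6*kk^15 + 5511157033539312*j^7 + 24402337566219672*j^7*kk + 49206559332674400*j^7*kk^2 + 59753606123977158*j^7*kk^3 + 48676225473312096*j^7*kk^4 + 28035215918313504*j^7*kk^5 + 11717026169283792*j^7*kk^6 + 3587182842856299*j^7*kk^7 + 801476866654388*j^7*kk^8 + 128483509722755*j^7*kk^9 + 14290261029968*j^7*kk^10 + 1040182640616*j^7*kk^11 + 44748390400*j^7*kk^12 + 937760128*j^7*kk^13 + 6055936*j^7*kk^14 + 4625958590842824*j^8 + 19072183767188604*j^8*kk + 35593523531306002*j^8*kk^2 + 39719841234802964*j^8*kk^3 + 29484297834069939*j^8*kk^4 + 15317269503695528*j^8*kk^5 + 5702276514156633*j^8*kk^6 + 1530644787089310*j^8*kk^7 + 293777112324228*j^8*kk^8 + 39362305909580*j^8*kk^9 +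 3521427346424*j^8*kk^10 + 194735685856*j^8*kk^11 + 5797580448*j^8*kk^12 + 69943808*j^8*kk^13 + 142848*j^8*kk^14 + 3162077791607376*j^9 + 12079987627004396*j^9*kk + 20749483328932064*j^9*kk^2 + 21143151114009349*j^9*kk^3 + 14195900473502894*j^9*kk^4 + 6594168147190644*j^9*kk^5 + 2163850444232646*j^9*kk^6 + 502767244058051*j^9*kk^7 + 81564058512704*j^9*kk^8 + 8943507868412*j^9*kk^9 + 625153068928*j^9*kk^10 + 25144647040*j^9*kk^11 + 479476736*j^9*kk^12 + 2744320*j^9*kk^13 + 1773077507456220*j^10 + 6242928531669360*j^10*kk + 9809340509416929*j^10*kk^2 + 9062753393387826*j^10*kk^3 + 5458594257807220*j^10*kk^4 + 2245107481291224*j^10*kk^5 + 641758968909809*j^10*kk^6 + 127193840238152*j^10*kk^7 + 17117356178720*j^10*kk^8 + 1497702049952*j^10*kk^9 + 78851706128*j^10*kk^10 + 2170954240*j^10*kk^11 + 23394560*j^10*kk^12 + 40960*j^10*kk^13 + 818983024329344*j^11 + 2641959710217956*j^11*kk + 3771728532738738*j^11*kk^2 + 3134792912607494*j^11*kk^3 + 1678255289084260*j^11*kk^4 + 604504066647104*j^11*kk^5 + 148512732706544*j^11*kk^6 + 24685062661940*j^11*kk^7 + 2694414682080*j^11*kk^8 + 182183931072*j^11*kk^9 + 6865828864*j^11*kk^10 + 117650944*j^11*kk^11 + 565248*j^11*kk^12 + 312057971396508*j^12 + 916245771681976*j^12*kk + 1179529273495440*j^12*kk^2 + 874224484685968*j^12*kk^3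 + 411735201450644*j^12*kk^4 + 128272283748880*j^12*kk^5 + 26666794335736*j^12*kk^6 + 3642171687168*j^12*kk^7 + 313319090496*j^12*kk^8 + 15657191936*j^12*kk^9 + 390182912*j^12*kk^10 + 3506176*j^12*kk^11 + 4096*j^12*kk^12 + 97971558440032*j^13 + 259893456345712*j^13*kk + 299164554289760*j^13*kk^2 + 195801518949328*j^13*kk^3 + 80186151182208*j^13*kk^4 + 21298874591776*j^13*kk^5 + 3677704454240*j^13*kk^6 + 402132705344*j^13*kk^7 + 26190340608*j^13*kk^8 + 902000640*j^13*kk^9 + 12894208*j^13*kk^10 + 40960*j^13*kk^11 + 25245125998176*j^14 + 60003407321664*j^14*kk + 61178717281472*j^14*kk^2 + 34971912092256*j^14*kk^3 + 12288940933552*j^14*kk^4 + 2735924337728*j^14*kk^5 + 383157877328*j^14*kk^6 + 32330781184*j^14*kk^7 + 1495731712*j^14*kk^8 + 31260672*j^14*kk^9 + 184320*j^14*kk^10 + 5301732226368*j^15 + 11184232445760*j^15*kk + 9993585342784*j^15*kk^2 + 4927795880832*j^15*kk^3 + 1462812204480*j^15*kk^4 + 267131666560*j^15*kk^5 + 29336973824*j^15*kk^6 + 1800461312*j^15*kk^7 + 52543488*j^15*kk^8 + 491520*j^15*kk^9 + 897564936384*j^16 + 1662315788928*j^16*kk + 1286240106752*j^16*kk^2 + 539365683200*j^16*kk^3 + 132669375168*j^16*kk^4 + 19274804224*j^16*kk^5 + 1570826752*j^16*kk^6 + 62619648*j^16*kk^7 + 860160*j^16*kk^8 + 120514576896*j^17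 + 193476944640*j^17*kk + 127910097920*j^17*kk^2 + 44852966656*j^17*kk^3 + 8901061120*j^17*kk^4 + 978059264*j^17*kk^5 + 53084160*j^17*kk^6 + 1032192*j^17*kk^7 + 12525598464*j^18 + 17170417664*j^18*kk + 9556200448*j^18*kk^2 + 2742522880*j^18*kk^3 + 420192512*j^18*kk^4 + 31531008*j^18*kk^5 + 860160*j^18*kk^6 + 970847232*j^19 + 1115762688*j^19*kk + 514605568*j^19*kk^2 + 116956672*j^19*kk^3 + 12623872*j^19*kk^4 + 491520*j^19*kk^5 + 52779008*j^20 + 49700864*j^20*kk + 18716672*j^20*kk^2 + 3145728*j^20*kk^3 + 184320*j^20*kk^4 + 1794048*j^21 + 1343488*j^21*kk + 409600*j^21*kk^2 + 40960*j^21*kk^3 + 28672*j^22 + 16384*j^22*kk + 4096*j^22*kk^2)"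
  unfolding pdefs by (simp only: of_nat_add of_nat_mult of_nat_power of_nat_numeral of_nat_1) algebra

lemma polyF3_pos: "0 < 4*Fh0 (real j + 1) (real kk) + 3*Fh1 (real j + 1) (real kk) + 2*Fh2 (real j + 1) (real kk) + 1*Fh3 (real j + 1) (real kk)"
proof -
  have h: "(0::nat) < 5378837970240 + 35302602218976*kk + 108607134968208*kk^2 + 208024141615632*kk^3 + 277875623152800*kk^4 + 274773641068050*kk^5 + 208350528007902*kk^6 + 123809304837309*kk^7 + 58419082342758*kk^8 + 22039341755955*kk^9 + 6659942608830*kk^10 + 1607270499666*kk^11 + 307301578950*kk^12 + 45889921968*kk^13 + 5231721660*kk^14 + 439145280*kk^15 + 25544832*kk^16 + 918528*kk^17 + 15360*kk^18 + 60116586604416*j + 376485070180752*j*kk + 1101849237126360*j*kk^2 + 2000815707019824*j*kk^3 + 2523819973219638*j*kk^4 + 2345889957389487*j*kk^5 + 1663092327001016*j*kk^6 + 918095732686337*j*kk^7 + 399349979854240*j*kk^8 + 137579533174844*j*kk^9 + 37518054496808*j*kk^10 + 8047816229472*j*kk^11 + 1340436683366*j*kk^12 + 169613882744*j*kk^13 + 15736062256*j*kk^14 + 1008030656*j*kk^15 + 39785216*j*kk^16 + 728064*j*kk^17 + 315144441406368*j^2 + 1878124582633752*j^2*kk + 5213372767417116*j^2*kk^2 + 8944944930754704*j^2*kk^3 + 10614615962779737*j^2*kk^4 + 9234516746419798*j^2*kk^5 + 6090704033410452*j^2*kk^6 + 3105626030766004*j^2*kk^7 + 1236820020834911*j^2*kk^8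 + 385882790633028*j^2*kk^9 + 93985136326010*j^2*kk^10 + 17681383162642*j^2*kk^11 + 2519779657806*j^2*kk^12 + 263315845576*j^2*kk^13 + 19102488176*j^2*kk^14 + 870256320*j^2*kk^15 + 19881728*j^2*kk^16 + 89088*j^2*kk^17 + 1030537096907616*j^3 + 5827329893626236*j^3*kk + 15292161502103898*j^3*kk^2 + 24700968728763246*j^3*kk^3 + 27461188893368330*j^3*kk^4 + 22255439330638241*j^3*kk^5 + 13581800611077586*j^3*kk^6 + 6355598639257007*j^3*kk^7 + 2299652962660368*j^3*kk^8 + 643669951308460*j^3*kk^9 + 138361105870032*j^3*kk^10 + 22475692243208*j^3*kk^11 + 2682234787648*j^3*kk^12 + 224240839232*j^3*kk^13 + 12076304832*j^3*kk^14 + 353731072*j^3*kk^15 + 3533824*j^3*kk^16 + 2358379801637172*j^4 + 12613498877874420*j^4*kk + 31181813543822652*j^4*kk^2 + 47227962436308600*j^4*kk^3 + 48968015851631877*j^4*kk^4 + 36776602388234499*j^4*kk^5 + 20640684708179023*j^4*kk^6 + 8800791323008316*j^4*kk^7 + 2868219877711212*j^4*kk^8 + 712539609944648*j^4*kk^9 + 133339545940390*j^4*kk^10 + 18364491827583*j^4*kk^11 + 1788715660660*j^4*kk^12 + 115039507160*j^4*kk^13 + 4299548448*j^4*kk^14 + 70283648*j^4*kk^15 + 205312*j^4*kk^16 + 4016913766587360*j^5 + 20250637275332700*j^5*kk + 46978198296474708*j^5*kk^2 + 66428099592869081*j^5*kk^3 + 63915825344231378*j^5*kk^4 + 44229210316025368*j^5*kk^5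 + 22675903683335898*j^5*kk^6 + 8739229830932406*j^5*kk^7 + 2540430683173714*j^5*kk^8 + 553354065479165*j^5*kk^9 + 88737903777734*j^5*kk^10 + 10143843693400*j^5*kk^11 + 782094134208*j^5*kk^12 + 36883759296*j^5*kk^13 + 878200576*j^5*kk^14 + 6641664*j^5*kk^15 + 5287027657409964*j^6 + 25030042348911408*j^6*kk + 54260605502060013*j^6*kk^2 + 71288943819040842*j^6*kk^3 + 63305316562223199*j^6*kk^4 + 40106697446371121*j^6*kk^5 + 18643066790287556*j^6*kk^6 + 6436223458167600*j^6*kk^7 + 1650527010167089*j^6*kk^8 + 310876349806279*j^6*kk^9 + 41954256098337*j^6*kk^10 + 3882945115556*j^6*kk^11 + 228534861464*j^6*kk^12 + 7455245376*j^6*kk^13 + 101266816*j^6*kk^14 + 237568*j^6*kk^15 + 5511157033539312*j^7 + 24402337566219672*j^7*kk + 49206559332674400*j^7*kk^2 + 59753606123977158*j^7*kk^3 + 48676225473312096*j^7*kk^4 + 28035215918313504*j^7*kk^5 + 11717026169283792*j^7*kk^6 + 3587182842856299*j^7*kk^7 + 801476866654388*j^7*kk^8 + 128483509722755*j^7*kk^9 + 14290261029968*j^7*kk^10 + 1040182640616*j^7*kk^11 + 44748390400*j^7*kk^12 + 937760128*j^7*kk^13 + 6055936*j^7*kk^14 + 4625958590842824*j^8 + 19072183767188604*j^8*kk + 35593523531306002*j^8*kk^2 + 39719841234802964*j^8*kk^3 + 29484297834069939*j^8*kk^4 + 15317269503695528*j^8*kk^5 + 5702276514156633*j^8*kk^6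 + 1530644787089310*j^8*kk^7 + 293777112324228*j^8*kk^8 + 39362305909580*j^8*kk^9 + 3521427346424*j^8*kk^10 + 194735685856*j^8*kk^11 + 5797580448*j^8*kk^12 + 69943808*j^8*kk^13 + 142848*j^8*kk^14 + 3162077791607376*j^9 + 12079987627004396*j^9*kk + 20749483328932064*j^9*kk^2 + 21143151114009349*j^9*kk^3 + 14195900473502894*j^9*kk^4 + 6594168147190644*j^9*kk^5 + 2163850444232646*j^9*kk^6 + 502767244058051*j^9*kk^7 + 81564058512704*j^9*kk^8 + 8943507868412*j^9*kk^9 + 625153068928*j^9*kk^10 + 25144647040*j^9*kk^11 + 479476736*j^9*kk^12 + 2744320*j^9*kk^13 + 1773077507456220*j^10 + 6242928531669360*j^10*kk + 9809340509416929*j^10*kk^2 + 9062753393387826*j^10*kk^3 + 5458594257807220*j^10*kk^4 + 2245107481291224*j^10*kk^5 + 641758968909809*j^10*kk^6 + 127193840238152*j^10*kk^7 + 17117356178720*j^10*kk^8 + 1497702049952*j^10*kk^9 + 78851706128*j^10*kk^10 + 2170954240*j^10*kk^11 + 23394560*j^10*kk^12 + 40960*j^10*kk^13 + 818983024329344*j^11 + 2641959710217956*j^11*kk + 3771728532738738*j^11*kk^2 + 3134792912607494*j^11*kk^3 + 1678255289084260*j^11*kk^4 + 604504066647104*j^11*kk^5 + 148512732706544*j^11*kk^6 + 24685062661940*j^11*kk^7 + 2694414682080*j^11*kk^8 + 182183931072*j^11*kk^9 + 6865828864*j^11*kk^10 + 117650944*j^11*kk^11 + 565248*j^11*kk^12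 + 312057971396508*j^12 + 916245771681976*j^12*kk + 1179529273495440*j^12*kk^2 + 874224484685968*j^12*kk^3 + 411735201450644*j^12*kk^4 + 128272283748880*j^12*kk^5 + 26666794335736*j^12*kk^6 + 3642171687168*j^12*kk^7 + 313319090496*j^12*kk^8 + 15657191936*j^12*kk^9 + 390182912*j^12*kk^10 + 3506176*j^12*kk^11 + 4096*j^12*kk^12 + 97971558440032*j^13 + 259893456345712*j^13*kk + 299164554289760*j^13*kk^2 + 195801518949328*j^13*kk^3 + 80186151182208*j^13*kk^4 + 21298874591776*j^13*kk^5 + 3677704454240*j^13*kk^6 + 402132705344*j^13*kk^7 + 26190340608*j^13*kk^8 + 902000640*j^13*kk^9 + 12894208*j^13*kk^10 + 40960*j^13*kk^11 + 25245125998176*j^14 + 60003407321664*j^14*kk + 61178717281472*j^14*kk^2 + 34971912092256*j^14*kk^3 + 12288940933552*j^14*kk^4 + 2735924337728*j^14*kk^5 + 383157877328*j^14*kk^6 + 32330781184*j^14*kk^7 + 1495731712*j^14*kk^8 + 31260672*j^14*kk^9 + 184320*j^14*kk^10 + 5301732226368*j^15 + 11184232445760*j^15*kk + 9993585342784*j^15*kk^2 + 4927795880832*j^15*kk^3 + 1462812204480*j^15*kk^4 + 267131666560*j^15*kk^5 + 29336973824*j^15*kk^6 + 1800461312*j^15*kk^7 + 52543488*j^15*kk^8 + 491520*j^15*kk^9 + 897564936384*j^16 + 1662315788928*j^16*kk + 1286240106752*j^16*kk^2 + 539365683200*j^16*kk^3 + 132669375168*j^16*kk^4 + 19274804224*j^16*kk^5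 + 1570826752*j^16*kk^6 + 62619648*j^16*kk^7 + 860160*j^16*kk^8 + 120514576896*j^17 + 193476944640*j^17*kk + 127910097920*j^17*kk^2 + 44852966656*j^17*kk^3 + 8901061120*j^17*kk^4 + 978059264*j^17*kk^5 + 53084160*j^17*kk^6 + 1032192*j^17*kk^7 + 12525598464*j^18 + 17170417664*j^18*kk + 9556200448*j^18*kk^2 + 2742522880*j^18*kk^3 + 420192512*j^18*kk^4 + 31531008*j^18*kk^5 + 860160*j^18*kk^6 + 970847232*j^19 + 1115762688*j^19*kk + 514605568*j^19*kk^2 + 116956672*j^19*kk^3 + 12623872*j^19*kk^4 + 491520*j^19*kk^5 + 52779008*j^20 + 49700864*j^20*kk + 18716672*j^20*kk^2 + 3145728*j^20*kk^3 + 184320*j^20*kk^4 + 1794048*j^21 + 1343488*j^21*kk + 409600*j^21*kk^2 + 40960*j^21*kk^3 + 28672*j^22 + 16384*j^22*kk + 4096*j^22*kk^2" by simp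
  have "(0::real) < real (5378837970240 + 35302602218976*kk + 108607134968208*kk^2 + 208024141615632*kk^3 + 277875623152800*kk^4 + 274773641068050*kk^5 + 208350528007902*kk^6 + 123809304837309*kk^7 + 58419082342758*kk^8 + 22039341755955*kk^9 + 6659942608830*kk^10 + 1607270499666*kk^11 + 307301578950*kk^12 + 45889921968*kk^13 + 5231721660*kk^14 + 439145280*kk^15 + 25544832*kk^16 + 918528*kk^17 + 15360*kk^18 + 60116586604416*j + 376485070180752*j*kk + 1101849237126360*j*kk^2 + 2000815707019824*j*kk^3 + 2523819973219638*j*kk^4 + 2345889957389487*j*kk^5 + 1663092327001016*j*kk^6 + 918095732686337*j*kk^7 + 399349979854240*j*kk^8 + 137579533174844*j*kk^9 + 37518054496808*j*kk^10 + 8047816229472*j*kk^11 + 1340436683366*j*kk^12 + 169613882744*j*kk^13 + 15736062256*j*kk^14 + 1008030656*j*kk^15 + 39785216*j*kk^16 + 728064*j*kk^17 + 315144441406368*j^2 + 1878124582633752*j^2*kk + 5213372767417116*j^2*kk^2 + 8944944930754704*j^2*kk^3 + 10614615962779737*j^2*kk^4 + 9234516746419798*j^2*kk^5 + 6090704033410452*j^2*kk^6 + 3105626030766004*j^2*kk^7 + 1236820020834911*j^2*kk^8 + 385882790633028*j^2*kk^9 + 93985136326010*j^2*kk^10 + 17681383162642*j^2*kk^11 + 2519779657806*j^2*kk^12 + 263315845576*j^2*kk^13 + 19102488176*j^2*kk^14 + 870256320*j^2*kk^15 + 19881728*j^2*kk^16 + 89088*j^2*kk^17 + 1030537096907616*j^3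 + 5827329893626236*j^3*kk + 15292161502103898*j^3*kk^2 + 24700968728763246*j^3*kk^3 + 27461188893368330*j^3*kk^4 + 22255439330638241*j^3*kk^5 + 13581800611077586*j^3*kk^6 + 6355598639257007*j^3*kk^7 + 2299652962660368*j^3*kk^8 + 643669951308460*j^3*kk^9 + 138361105870032*j^3*kk^10 + 22475692243208*j^3*kk^11 + 2682234787648*j^3*kk^12 + 224240839232*j^3*kk^13 + 12076304832*j^3*kk^14 + 353731072*j^3*kk^15 + 3533824*j^3*kk^16 + 2358379801637172*j^4 + 12613498877874420*j^4*kk + 31181813543822652*j^4*kk^2 + 47227962436308600*j^4*kk^3 + 48968015851631877*j^4*kk^4 + 36776602388234499*j^4*kk^5 + 20640684708179023*j^4*kk^6 + 8800791323008316*j^4*kk^7 + 2868219877711212*j^4*kk^8 + 712539609944648*j^4*kk^9 + 133339545940390*j^4*kk^10 + 18364491827583*j^4*kk^11 + 1788715660660*j^4*kk^12 + 115039507160*j^4*kk^13 + 4299548448*j^4*kk^14 + 70283648*j^4*kk^15 + 205312*j^4*kk^16 + 4016913766587360*j^5 + 20250637275332700*j^5*kk + 46978198296474708*j^5*kk^2 + 66428099592869081*j^5*kk^3 + 63915825344231378*j^5*kk^4 + 44229210316025368*j^5*kk^5 + 22675903683335898*j^5*kk^6 + 8739229830932406*j^5*kk^7 + 2540430683173714*j^5*kk^8 + 553354065479165*j^5*kk^9 + 88737903777734*j^5*kk^10 + 10143843693400*j^5*kk^11 + 782094134208*j^5*kk^12 + 36883759296*j^5*kk^13 + 878200576*j^5*kk^14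 + 6641664*j^5*kk^15 + 5287027657409964*j^6 + 25030042348911408*j^6*kk + 54260605502060013*j^6*kk^2 + 71288943819040842*j^6*kk^3 + 63305316562223199*j^6*kk^4 + 40106697446371121*j^6*kk^5 + 18643066790287556*j^6*kk^6 + 6436223458167600*j^6*kk^7 + 1650527010167089*j^6*kk^8 + 310876349806279*j^6*kk^9 + 41954256098337*j^6*kk^10 + 3882945115556*j^6*kk^11 + 228534861464*j^6*kk^12 + 7455245376*j^6*kk^13 + 101266816*j^6*kk^14 + 237568*j^6*kk^15 + 5511157033539312*j^7 + 24402337566219672*j^7*kk + 49206559332674400*j^7*kk^2 + 59753606123977158*j^7*kk^3 + 48676225473312096*j^7*kk^4 + 28035215918313504*j^7*kk^5 + 11717026169283792*j^7*kk^6 + 3587182842856299*j^7*kk^7 + 801476866654388*j^7*kk^8 + 128483509722755*j^7*kk^9 + 14290261029968*j^7*kk^10 + 1040182640616*j^7*kk^11 + 44748390400*j^7*kk^12 + 937760128*j^7*kk^13 + 6055936*j^7*kk^14 + 4625958590842824*j^8 + 19072183767188604*j^8*kk + 35593523531306002*j^8*kk^2 + 39719841234802964*j^8*kk^3 + 29484297834069939*j^8*kk^4 + 15317269503695528*j^8*kk^5 + 5702276514156633*j^8*kk^6 + 1530644787089310*j^8*kk^7 + 293777112324228*j^8*kk^8 + 39362305909580*j^8*kk^9 + 3521427346424*j^8*kk^10 + 194735685856*j^8*kk^11 + 5797580448*j^8*kk^12 + 69943808*j^8*kk^13 + 142848*j^8*kk^14 + 3162077791607376*j^9 + 12079987627004396*j^9*kk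 + 20749483328932064*j^9*kk^2 + 21143151114009349*j^9*kk^3 + 14195900473502894*j^9*kk^4 + 6594168147190644*j^9*kk^5 + 2163850444232646*j^9*kk^6 + 502767244058051*j^9*kk^7 + 81564058512704*j^9*kk^8 + 8943507868412*j^9*kk^9 + 625153068928*j^9*kk^10 + 25144647040*j^9*kk^11 + 479476736*j^9*kk^12 + 2744320*j^9*kk^13 + 1773077507456220*j^10 + 6242928531669360*j^10*kk + 9809340509416929*j^10*kk^2 + 9062753393387826*j^10*kk^3 + 5458594257807220*j^10*kk^4 + 2245107481291224*j^10*kk^5 + 641758968909809*j^10*kk^6 + 127193840238152*j^10*kk^7 + 17117356178720*j^10*kk^8 + 1497702049952*j^10*kk^9 + 78851706128*j^10*kk^10 + 2170954240*j^10*kk^11 + 23394560*j^10*kk^12 + 40960*j^10*kk^13 + 818983024329344*j^11 + 2641959710217956*j^11*kk + 3771728532738738*j^11*kk^2 + 3134792912607494*j^11*kk^3 + 1678255289084260*j^11*kk^4 + 604504066647104*j^11*kk^5 + 148512732706544*j^11*kk^6 + 24685062661940*j^11*kk^7 + 2694414682080*j^11*kk^8 + 182183931072*j^11*kk^9 + 6865828864*j^11*kk^10 + 117650944*j^11*kk^11 + 565248*j^11*kk^12 + 312057971396508*j^12 + 916245771681976*j^12*kk + 1179529273495440*j^12*kk^2 + 874224484685968*j^12*kk^3 + 411735201450644*j^12*kk^4 + 128272283748880*j^12*kk^5 + 26666794335736*j^12*kk^6 + 3642171687168*j^12*kk^7 + 313319090496*j^12*kk^8 + 15657191936*j^12*kk^9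 + 390182912*j^12*kk^10 + 3506176*j^12*kk^11 + 4096*j^12*kk^12 + 97971558440032*j^13 + 259893456345712*j^13*kk + 299164554289760*j^13*kk^2 + 195801518949328*j^13*kk^3 + 80186151182208*j^13*kk^4 + 21298874591776*j^13*kk^5 + 3677704454240*j^13*kk^6 + 402132705344*j^13*kk^7 + 26190340608*j^13*kk^8 + 902000640*j^13*kk^9 + 12894208*j^13*kk^10 + 40960*j^13*kk^11 + 25245125998176*j^14 + 60003407321664*j^14*kk + 61178717281472*j^14*kk^2 + 34971912092256*j^14*kk^3 + 12288940933552*j^14*kk^4 + 2735924337728*j^14*kk^5 + 383157877328*j^14*kk^6 + 32330781184*j^14*kk^7 + 1495731712*j^14*kk^8 + 31260672*j^14*kk^9 + 184320*j^14*kk^10 + 5301732226368*j^15 + 11184232445760*j^15*kk + 9993585342784*j^15*kk^2 + 4927795880832*j^15*kk^3 + 1462812204480*j^15*kk^4 + 267131666560*j^15*kk^5 + 29336973824*j^15*kk^6 + 1800461312*j^15*kk^7 + 52543488*j^15*kk^8 + 491520*j^15*kk^9 + 897564936384*j^16 + 1662315788928*j^16*kk + 1286240106752*j^16*kk^2 + 539365683200*j^16*kk^3 + 132669375168*j^16*kk^4 + 19274804224*j^16*kk^5 + 1570826752*j^16*kk^6 + 62619648*j^16*kk^7 + 860160*j^16*kk^8 + 120514576896*j^17 + 193476944640*j^17*kk + 127910097920*j^17*kk^2 + 44852966656*j^17*kk^3 + 8901061120*j^17*kk^4 + 978059264*j^17*kk^5 + 53084160*j^17*kk^6 + 1032192*j^17*kk^7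 + 12525598464*j^18 + 17170417664*j^18*kk + 9556200448*j^18*kk^2 + 2742522880*j^18*kk^3 + 420192512*j^18*kk^4 + 31531008*j^18*kk^5 + 860160*j^18*kk^6 + 970847232*j^19 + 1115762688*j^19*kk + 514605568*j^19*kk^2 + 116956672*j^19*kk^3 + 12623872*j^19*kk^4 + 491520*j^19*kk^5 + 52779008*j^20 + 49700864*j^20*kk + 18716672*j^20*kk^2 + 3145728*j^20*kk^3 + 184320*j^20*kk^4 + 1794048*j^21 + 1343488*j^21*kk + 409600*j^21*kk^2 + 40960*j^21*kk^3 + 28672*j^22 + 16384*j^22*kk + 4096*j^22*kk^2)" using h by (simp only: of_nat_0_less_iff)
  then show ?thesis by (simp only: polyF3)
qed

lemma polyF4: "1*Fh0 (real j + 1) (real kk) + 1*Fh1 (real j + 1) (real kk) + 1*Fh2 (real j + 1) (real kk) + 1*Fh3 (real j + 1) (real kk) + 1*Fh4 (real j + 1) (real kk) = real (743483702016 + 4560196421088*kk + 13065971128416*kk^2 + 23219650152504*kk^3 + 28654954021692*kk^4 + 26050853183300*kk^5 + 18059208608681*kk^6 + 9746460085495*kk^7 + 4143909553521*kk^8 + 1395215739203*kk^9 + 371796053443*kk^10 + 77925548958*kk^11 + 12681294923*kk^12 + 1567816576*kk^13 + 142127488*kk^14 + 8897664*kk^15 + 343296*kk^16 + 6144*kk^17 + 8480106006912*j + 49654229182128*j*kk + 135445781022480*j*kk^2 + 228447763723464*j*kk^3 + 266630272680356*j*kk^4 + 228324565540649*j*kk^5 + 148390925287898*j*kk^6 + 74667073863921*j*kk^7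 + 29403373444848*j*kk^8 + 9096110040754*j*kk^9 + 2205237815794*j*kk^10 + 415295743408*j*kk^11 + 59754476168*j*kk^12 + 6392602780*j*kk^13 + 486607024*j*kk^14 + 24463168*j*kk^15 + 704768*j*kk^16 + 8192*j*kk^17 + 45277447982976*j^2 + 252260938612584*j^2*kk + 652695778170648*j^2*kk^2 + 1040486458707402*j^2*kk^3 + 1143104884220849*j^2*kk^4 + 917046106671156*j^2*kk^5 + 555233191081371*j^2*kk^6 + 258533946189432*j^2*kk^7 + 93446632739242*j^2*kk^8 + 26266024504898*j^2*kk^9 + 5711398165464*j^2*kk^10 + 948367932678*j^2*kk^11 + 117520924152*j^2*kk^12 + 10462560316*j^2*kk^13 + 627390320*j^2*kk^14 + 22441792*j^2*kk^15 + 355584*j^2*kk^16 + 150515872695360*j^3 + 795096010055988*j^3*kk + 1943565110732556*j^3*kk^2 + 2915201010131334*j^3*kk^3 + 2999208424198812*j^3*kk^4 + 2240727336890903*j^3*kk^5 + 1255101324802396*j^3*kk^6 + 536346500765477*j^3*kk^7 + 176159971078994*j^3*kk^8 + 44430686163092*j^3*kk^9 + 8527221772828*j^3*kk^10 + 1221896625778*j^3*kk^11 + 126490926940*j^3*kk^12 + 8942673856*j^3*kk^13 + 389407936*j^3*kk^14 + 8290304*j^3*kk^15 + 32768*j^3*kk^16 + 349540800186096*j^4 + 1743934700418768*j^4*kk + 4009978965058380*j^4*kk^2 + 5631340720483692*j^4*kk^3 + 5394843131399571*j^4*kk^4 + 3728921277465289*j^4*kk^5 + 1917421384889844*j^4*kk^6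 + 745048585743070*j^4*kk^7 + 219857110121604*j^4*kk^8 + 49054337328216*j^4*kk^9 + 8156975294529*j^4*kk^10 + 983471468587*j^4*kk^11 + 81967349598*j^4*kk^12 + 4335762872*j^4*kk^13 + 122340256*j^4*kk^14 + 1132416*j^4*kk^15 + 603110803626936*j^5 + 2830091632269300*j^5*kk + 6092282827425552*j^5*kk^2 + 7966943370282619*j^5*kk^3 + 7062613188233932*j^5*kk^4 + 4483431289582414*j^5*kk^5 + 2098050397518852*j^5*kk^6 + 733542210572180*j^5*kk^7 + 191973847414290*j^5*kk^8 + 37271020894515*j^5*kk^9 + 5253699858078*j^5*kk^10 + 516968529820*j^5*kk^11 + 33130666560*j^5*kk^12 + 1212602752*j^5*kk^13 + 18834176*j^5*kk^14 + 49152*j^5*kk^15 + 802832151353760*j^6 + 3526962023210184*j^6*kk + 7070887743320708*j^6*kk^2 + 8558825211133578*j^6*kk^3 + 6971989376685531*j^6*kk^4 + 4031473363150893*j^6*kk^5 + 1700027899586649*j^6*kk^6 + 528417077022800*j^6*kk^7 + 120811799886441*j^6*kk^8 + 20015900994007*j^6*kk^9 + 2329781962869*j^6*kk^10 + 180217139744*j^6*kk^11 + 8377854584*j^6*kk^12 + 191454592*j^6*kk^13 + 1324928*j^6*kk^14 + 845048718201192*j^7 + 3458012757738992*j^7*kk + 6419038770761546*j^7*kk^2 + 7143616001506092*j^7*kk^3 + 5305258151766454*j^7*kk^4 + 2768245300685464*j^7*kk^5 + 1040055194265660*j^7*kk^6 + 283397525710513*j^7*kk^7 + 55603986829084*j^7*kk^8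 + 7679571789979*j^7*kk^9 + 714718381364*j^7*kk^10 + 41461511048*j^7*kk^11 + 1297263040*j^7*kk^12 + 16196480*j^7*kk^13 + 32768*j^7*kk^14 + 715166740668912*j^8 + 2710640424030080*j^8*kk + 4628721744300480*j^8*kk^2 + 4700242344548824*j^8*kk^3 + 3153935122274237*j^8*kk^4 + 1469090231970038*j^8*kk^5 + 485293014290224*j^8*kk^6 + 114008012849022*j^8*kk^7 + 18787895019002*j^8*kk^8 + 2101525578386*j^8*kk^9 + 150152728183*j^8*kk^10 + 6145905600*j^8*kk^11 + 117108432*j^8*kk^12 + 644096*j^8*kk^13 + 492154855704048*j^9 + 1716880345022412*j^9*kk + 2677199249298316*j^9*kk^2 + 2459150255339683*j^9*kk^3 + 1475544338306248*j^9*kk^4 + 605824054524704*j^9*kk^5 + 173201647996744*j^9*kk^6 + 34379798344493*j^9*kk^7 + 4633157500052*j^9*kk^8 + 404538420628*j^9*kk^9 + 21030945664*j^9*kk^10 + 558169312*j^9*kk^11 + 5531136*j^9*kk^12 + 8192*j^9*kk^13 + 277424171422656*j^10 + 884391565036208*j^10*kk + 1248763696574820*j^10*kk^2 + 1027227830770376*j^10*kk^3 + 544464030521096*j^10*kk^4 + 194083527735512*j^10*kk^5 + 47106681315225*j^10*kk^6 + 7703392812608*j^10*kk^7 + 820188093335*j^10*kk^8 + 53198372544*j^10*kk^9 + 1863457520*j^10*kk^10 + 27950080*j^10*kk^11 + 102144*j^10*kk^12 + 128628478386568*j^11 + 371646529618308*j^11*kk + 470559386539646*j^11*kk^2 + 342563569275648*j^11*kk^3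 + 158059881643654*j^11*kk^4 + 48018528581530*j^11*kk^5 + 9657431634066*j^11*kk^6 + 1258940679022*j^11*kk^7 + 101023739392*j^11*kk^8 + 4525523648*j^11*kk^9 + 93873664*j^11*kk^10 + 584192*j^11*kk^11 + 49122614950432*j^12 + 127412644981840*j^12*kk + 142997431764308*j^12*kk^2 + 90825420420960*j^12*kk^3 + 35829524643776*j^12*kk^4 + 9061319453720*j^12*kk^5 + 1462722283916*j^12*kk^6 + 145227705280*j^12*kk^7 + 8184654704*j^12*kk^8 + 223408640*j^12*kk^9 + 2036736*j^12*kk^10 + 15432330521704*j^13 + 35528735812360*j^13*kk + 34855535068560*j^13*kk^2 + 18978409273728*j^13*kk^3 + 6255899628360*j^13*kk^4 + 1276735633752*j^13*kk^5 + 158216147840*j^13*kk^6 + 11164711648*j^13*kk^7 + 390648320*j^13*kk^8 + 4841472*j^13*kk^9 + 3972281143968*j^14 + 8006652835904*j^14*kk + 6748642457296*j^14*kk^2 + 3079988851360*j^14*kk^3 + 822872378672*j^14*kk^4 + 129720300224*j^14*kk^5 + 11527463312*j^14*kk^6 + 511699456*j^14*kk^7 + 8296960*j^14*kk^8 + 831728980608*j^15 + 1442967556096*j^15*kk + 1022066216064*j^15*kk^2 + 379415975040*j^15*kk^3 + 78690338368*j^15*kk^4 + 8957502720*j^15*kk^5 + 505633280*j^15*kk^6 + 10548224*j^15*kk^7 + 140090748864*j^16 + 204661661056*j^16*kk + 118257436928*j^16*kk^2 + 34217387520*j^16*kk^3 + 5153064640*j^16*kk^4 + 375464448*j^16*kk^5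 + 10064896*j^16*kk^6 + 18669568512*j^17 + 22301244672*j^17*kk + 10076848640*j^17*kk^2 + 2126804224*j^17*kk^3 + 206282752*j^17*kk^4 + 7196672*j^17*kk^5 + 1920893952*j^18 + 1798857728*j^18*kk + 595051776*j^18*kk^2 + 81293824*j^18*kk^3 + 3800832*j^18*kk^4 + 146966016*j^19 + 101030400*j^19*kk + 21719040*j^19*kk^2 + 1438208*j^19*kk^3 + 7862272*j^20 + 3522560*j^20*kk + 368640*j^20*kk^2 + 262144*j^21 + 57344*j^21*kk + 4096*j^22)"
  unfolding pdefs by (simp only: of_nat_add of_nat_mult of_nat_power of_nat_numeral of_nat_1) algebra

lemma polyF4_pos: "0 < 1*Fh0 (real j + 1) (real kk) + 1*Fh1 (real j + 1) (real kk) + 1*Fh2 (real j + 1) (real kk) + 1*Fh3 (real j + 1) (real kk) + 1*Fh4 (real j + 1) (real kk)"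
proof -
  have h: "(0::nat) < 743483702016 + 4560196421088*kk + 13065971128416*kk^2 + 23219650152504*kk^3 + 28654954021692*kk^4 + 26050853183300*kk^5 + 18059208608681*kk^6 + 9746460085495*kk^7 + 4143909553521*kk^8 + 1395215739203*kk^9 + 371796053443*kk^10 + 77925548958*kk^11 + 12681294923*kk^12 + 1567816576*kk^13 + 142127488*kk^14 + 8897664*kk^15 + 343296*kk^16 + 6144*kk^17 + 8480106006912*j + 49654229182128*j*kk + 135445781022480*j*kk^2 + 228447763723464*j*kk^3 + 266630272680356*j*kk^4 + 228324565540649*j*kk^5 + 148390925287898*j*kk^6 + 74667073863921*j*kk^7 + 29403373444848*j*kk^8 + 9096110040754*j*kk^9 + 2205237815794*j*kk^10 + 415295743408*j*kk^11 + 59754476168*j*kk^12 + 6392602780*j*kk^13 + 486607024*j*kk^14 + 24463168*j*kk^15 + 704768*j*kk^16 + 8192*j*kk^17 + 45277447982976*j^2 + 252260938612584*j^2*kk + 652695778170648*j^2*kk^2 + 1040486458707402*j^2*kk^3 + 1143104884220849*j^2*kk^4 + 917046106671156*j^2*kk^5 + 555233191081371*j^2*kk^6 + 258533946189432*j^2*kk^7 + 93446632739242*j^2*kk^8 + 26266024504898*j^2*kk^9 + 5711398165464*j^2*kk^10 + 948367932678*j^2*kk^11 + 117520924152*j^2*kk^12 + 10462560316*j^2*kk^13 + 627390320*j^2*kk^14 + 22441792*j^2*kk^15 + 355584*j^2*kk^16 + 150515872695360*j^3 + 795096010055988*j^3*kk + 1943565110732556*j^3*kk^2 + 2915201010131334*j^3*kk^3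 + 2999208424198812*j^3*kk^4 + 2240727336890903*j^3*kk^5 + 1255101324802396*j^3*kk^6 + 536346500765477*j^3*kk^7 + 176159971078994*j^3*kk^8 + 44430686163092*j^3*kk^9 + 8527221772828*j^3*kk^10 + 1221896625778*j^3*kk^11 + 126490926940*j^3*kk^12 + 8942673856*j^3*kk^13 + 389407936*j^3*kk^14 + 8290304*j^3*kk^15 + 32768*j^3*kk^16 + 349540800186096*j^4 + 1743934700418768*j^4*kk + 4009978965058380*j^4*kk^2 + 5631340720483692*j^4*kk^3 + 5394843131399571*j^4*kk^4 + 3728921277465289*j^4*kk^5 + 1917421384889844*j^4*kk^6 + 745048585743070*j^4*kk^7 + 219857110121604*j^4*kk^8 + 49054337328216*j^4*kk^9 + 8156975294529*j^4*kk^10 + 983471468587*j^4*kk^11 + 81967349598*j^4*kk^12 + 4335762872*j^4*kk^13 + 122340256*j^4*kk^14 + 1132416*j^4*kk^15 + 603110803626936*j^5 + 2830091632269300*j^5*kk + 6092282827425552*j^5*kk^2 + 7966943370282619*j^5*kk^3 + 7062613188233932*j^5*kk^4 + 4483431289582414*j^5*kk^5 + 2098050397518852*j^5*kk^6 + 733542210572180*j^5*kk^7 + 191973847414290*j^5*kk^8 + 37271020894515*j^5*kk^9 + 5253699858078*j^5*kk^10 + 516968529820*j^5*kk^11 + 33130666560*j^5*kk^12 + 1212602752*j^5*kk^13 + 18834176*j^5*kk^14 + 49152*j^5*kk^15 + 802832151353760*j^6 + 3526962023210184*j^6*kk + 7070887743320708*j^6*kk^2 + 8558825211133578*j^6*kk^3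 + 6971989376685531*j^6*kk^4 + 4031473363150893*j^6*kk^5 + 1700027899586649*j^6*kk^6 + 528417077022800*j^6*kk^7 + 120811799886441*j^6*kk^8 + 20015900994007*j^6*kk^9 + 2329781962869*j^6*kk^10 + 180217139744*j^6*kk^11 + 8377854584*j^6*kk^12 + 191454592*j^6*kk^13 + 1324928*j^6*kk^14 + 845048718201192*j^7 + 3458012757738992*j^7*kk + 6419038770761546*j^7*kk^2 + 7143616001506092*j^7*kk^3 + 5305258151766454*j^7*kk^4 + 2768245300685464*j^7*kk^5 + 1040055194265660*j^7*kk^6 + 283397525710513*j^7*kk^7 + 55603986829084*j^7*kk^8 + 7679571789979*j^7*kk^9 + 714718381364*j^7*kk^10 + 41461511048*j^7*kk^11 + 1297263040*j^7*kk^12 + 16196480*j^7*kk^13 + 32768*j^7*kk^14 + 715166740668912*j^8 + 2710640424030080*j^8*kk + 4628721744300480*j^8*kk^2 + 4700242344548824*j^8*kk^3 + 3153935122274237*j^8*kk^4 + 1469090231970038*j^8*kk^5 + 485293014290224*j^8*kk^6 + 114008012849022*j^8*kk^7 + 18787895019002*j^8*kk^8 + 2101525578386*j^8*kk^9 + 150152728183*j^8*kk^10 + 6145905600*j^8*kk^11 + 117108432*j^8*kk^12 + 644096*j^8*kk^13 + 492154855704048*j^9 + 1716880345022412*j^9*kk + 2677199249298316*j^9*kk^2 + 2459150255339683*j^9*kk^3 + 1475544338306248*j^9*kk^4 + 605824054524704*j^9*kk^5 + 173201647996744*j^9*kk^6 + 34379798344493*j^9*kk^7 + 4633157500052*j^9*kk^8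 + 404538420628*j^9*kk^9 + 21030945664*j^9*kk^10 + 558169312*j^9*kk^11 + 5531136*j^9*kk^12 + 8192*j^9*kk^13 + 277424171422656*j^10 + 884391565036208*j^10*kk + 1248763696574820*j^10*kk^2 + 1027227830770376*j^10*kk^3 + 544464030521096*j^10*kk^4 + 194083527735512*j^10*kk^5 + 47106681315225*j^10*kk^6 + 7703392812608*j^10*kk^7 + 820188093335*j^10*kk^8 + 53198372544*j^10*kk^9 + 1863457520*j^10*kk^10 + 27950080*j^10*kk^11 + 102144*j^10*kk^12 + 128628478386568*j^11 + 371646529618308*j^11*kk + 470559386539646*j^11*kk^2 + 342563569275648*j^11*kk^3 + 158059881643654*j^11*kk^4 + 48018528581530*j^11*kk^5 + 9657431634066*j^11*kk^6 + 1258940679022*j^11*kk^7 + 101023739392*j^11*kk^8 + 4525523648*j^11*kk^9 + 93873664*j^11*kk^10 + 584192*j^11*kk^11 + 49122614950432*j^12 + 127412644981840*j^12*kk + 142997431764308*j^12*kk^2 + 90825420420960*j^12*kk^3 + 35829524643776*j^12*kk^4 + 9061319453720*j^12*kk^5 + 1462722283916*j^12*kk^6 + 145227705280*j^12*kk^7 + 8184654704*j^12*kk^8 + 223408640*j^12*kk^9 + 2036736*j^12*kk^10 + 15432330521704*j^13 + 35528735812360*j^13*kk + 34855535068560*j^13*kk^2 + 18978409273728*j^13*kk^3 + 6255899628360*j^13*kk^4 + 1276735633752*j^13*kk^5 + 158216147840*j^13*kk^6 + 11164711648*j^13*kk^7 + 390648320*j^13*kk^8 + 4841472*j^13*kk^9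 + 3972281143968*j^14 + 8006652835904*j^14*kk + 6748642457296*j^14*kk^2 + 3079988851360*j^14*kk^3 + 822872378672*j^14*kk^4 + 129720300224*j^14*kk^5 + 11527463312*j^14*kk^6 + 511699456*j^14*kk^7 + 8296960*j^14*kk^8 + 831728980608*j^15 + 1442967556096*j^15*kk + 1022066216064*j^15*kk^2 + 379415975040*j^15*kk^3 + 78690338368*j^15*kk^4 + 8957502720*j^15*kk^5 + 505633280*j^15*kk^6 + 10548224*j^15*kk^7 + 140090748864*j^16 + 204661661056*j^16*kk + 118257436928*j^16*kk^2 + 34217387520*j^16*kk^3 + 5153064640*j^16*kk^4 + 375464448*j^16*kk^5 + 10064896*j^16*kk^6 + 18669568512*j^17 + 22301244672*j^17*kk + 10076848640*j^17*kk^2 + 2126804224*j^17*kk^3 + 206282752*j^17*kk^4 + 7196672*j^17*kk^5 + 1920893952*j^18 + 1798857728*j^18*kk + 595051776*j^18*kk^2 + 81293824*j^18*kk^3 + 3800832*j^18*kk^4 + 146966016*j^19 + 101030400*j^19*kk + 21719040*j^19*kk^2 + 1438208*j^19*kk^3 + 7862272*j^20 + 3522560*j^20*kk + 368640*j^20*kk^2 + 262144*j^21 + 57344*j^21*kk + 4096*j^22" by simp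
  have "(0::real) < real (743483702016 + 4560196421088*kk + 13065971128416*kk^2 + 23219650152504*kk^3 + 28654954021692*kk^4 + 26050853183300*kk^5 + 18059208608681*kk^6 + 9746460085495*kk^7 + 4143909553521*kk^8 + 1395215739203*kk^9 + 371796053443*kk^10 + 77925548958*kk^11 + 12681294923*kk^12 + 1567816576*kk^13 + 142127488*kk^14 + 8897664*kk^15 + 343296*kk^16 + 6144*kk^17 + 8480106006912*j + 49654229182128*j*kk + 135445781022480*j*kk^2 + 228447763723464*j*kk^3 + 266630272680356*j*kk^4 + 228324565540649*j*kk^5 + 148390925287898*j*kk^6 + 74667073863921*j*kk^7 + 29403373444848*j*kk^8 + 9096110040754*j*kk^9 + 2205237815794*j*kk^10 + 415295743408*j*kk^11 + 59754476168*j*kk^12 + 6392602780*j*kk^13 + 486607024*j*kk^14 + 24463168*j*kk^15 + 704768*j*kk^16 + 8192*j*kk^17 + 45277447982976*j^2 + 252260938612584*j^2*kk + 652695778170648*j^2*kk^2 + 1040486458707402*j^2*kk^3 + 1143104884220849*j^2*kk^4 + 917046106671156*j^2*kk^5 + 555233191081371*j^2*kk^6 + 258533946189432*j^2*kk^7 + 93446632739242*j^2*kk^8 + 26266024504898*j^2*kk^9 + 5711398165464*j^2*kk^10 + 948367932678*j^2*kk^11 + 117520924152*j^2*kk^12 + 10462560316*j^2*kk^13 + 627390320*j^2*kk^14 + 22441792*j^2*kk^15 + 355584*j^2*kk^16 + 150515872695360*j^3 + 795096010055988*j^3*kk + 1943565110732556*j^3*kk^2 + 2915201010131334*j^3*kk^3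 + 2999208424198812*j^3*kk^4 + 2240727336890903*j^3*kk^5 + 1255101324802396*j^3*kk^6 + 536346500765477*j^3*kk^7 + 176159971078994*j^3*kk^8 + 44430686163092*j^3*kk^9 + 8527221772828*j^3*kk^10 + 1221896625778*j^3*kk^11 + 126490926940*j^3*kk^12 + 8942673856*j^3*kk^13 + 389407936*j^3*kk^14 + 8290304*j^3*kk^15 + 32768*j^3*kk^16 + 349540800186096*j^4 + 1743934700418768*j^4*kk + 4009978965058380*j^4*kk^2 + 5631340720483692*j^4*kk^3 + 5394843131399571*j^4*kk^4 + 3728921277465289*j^4*kk^5 + 1917421384889844*j^4*kk^6 + 745048585743070*j^4*kk^7 + 219857110121604*j^4*kk^8 + 49054337328216*j^4*kk^9 + 8156975294529*j^4*kk^10 + 983471468587*j^4*kk^11 + 81967349598*j^4*kk^12 + 4335762872*j^4*kk^13 + 122340256*j^4*kk^14 + 1132416*j^4*kk^15 + 603110803626936*j^5 + 2830091632269300*j^5*kk + 6092282827425552*j^5*kk^2 + 7966943370282619*j^5*kk^3 + 7062613188233932*j^5*kk^4 + 4483431289582414*j^5*kk^5 + 2098050397518852*j^5*kk^6 + 733542210572180*j^5*kk^7 + 191973847414290*j^5*kk^8 + 37271020894515*j^5*kk^9 + 5253699858078*j^5*kk^10 + 516968529820*j^5*kk^11 + 33130666560*j^5*kk^12 + 1212602752*j^5*kk^13 + 18834176*j^5*kk^14 + 49152*j^5*kk^15 + 802832151353760*j^6 + 3526962023210184*j^6*kk + 7070887743320708*j^6*kk^2 + 8558825211133578*j^6*kk^3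 + 6971989376685531*j^6*kk^4 + 4031473363150893*j^6*kk^5 + 1700027899586649*j^6*kk^6 + 528417077022800*j^6*kk^7 + 120811799886441*j^6*kk^8 + 20015900994007*j^6*kk^9 + 2329781962869*j^6*kk^10 + 180217139744*j^6*kk^11 + 8377854584*j^6*kk^12 + 191454592*j^6*kk^13 + 1324928*j^6*kk^14 + 845048718201192*j^7 + 3458012757738992*j^7*kk + 6419038770761546*j^7*kk^2 + 7143616001506092*j^7*kk^3 + 5305258151766454*j^7*kk^4 + 2768245300685464*j^7*kk^5 + 1040055194265660*j^7*kk^6 + 283397525710513*j^7*kk^7 + 55603986829084*j^7*kk^8 + 7679571789979*j^7*kk^9 + 714718381364*j^7*kk^10 + 41461511048*j^7*kk^11 + 1297263040*j^7*kk^12 + 16196480*j^7*kk^13 + 32768*j^7*kk^14 + 715166740668912*j^8 + 2710640424030080*j^8*kk + 4628721744300480*j^8*kk^2 + 4700242344548824*j^8*kk^3 + 3153935122274237*j^8*kk^4 + 1469090231970038*j^8*kk^5 + 485293014290224*j^8*kk^6 + 114008012849022*j^8*kk^7 + 18787895019002*j^8*kk^8 + 2101525578386*j^8*kk^9 + 150152728183*j^8*kk^10 + 6145905600*j^8*kk^11 + 117108432*j^8*kk^12 + 644096*j^8*kk^13 + 492154855704048*j^9 + 1716880345022412*j^9*kk + 2677199249298316*j^9*kk^2 + 2459150255339683*j^9*kk^3 + 1475544338306248*j^9*kk^4 + 605824054524704*j^9*kk^5 + 173201647996744*j^9*kk^6 + 34379798344493*j^9*kk^7 + 4633157500052*j^9*kk^8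 + 404538420628*j^9*kk^9 + 21030945664*j^9*kk^10 + 558169312*j^9*kk^11 + 5531136*j^9*kk^12 + 8192*j^9*kk^13 + 277424171422656*j^10 + 884391565036208*j^10*kk + 1248763696574820*j^10*kk^2 + 1027227830770376*j^10*kk^3 + 544464030521096*j^10*kk^4 + 194083527735512*j^10*kk^5 + 47106681315225*j^10*kk^6 + 7703392812608*j^10*kk^7 + 820188093335*j^10*kk^8 + 53198372544*j^10*kk^9 + 1863457520*j^10*kk^10 + 27950080*j^10*kk^11 + 102144*j^10*kk^12 + 128628478386568*j^11 + 371646529618308*j^11*kk + 470559386539646*j^11*kk^2 + 342563569275648*j^11*kk^3 + 158059881643654*j^11*kk^4 + 48018528581530*j^11*kk^5 + 9657431634066*j^11*kk^6 + 1258940679022*j^11*kk^7 + 101023739392*j^11*kk^8 + 4525523648*j^11*kk^9 + 93873664*j^11*kk^10 + 584192*j^11*kk^11 + 49122614950432*j^12 + 127412644981840*j^12*kk + 142997431764308*j^12*kk^2 + 90825420420960*j^12*kk^3 + 35829524643776*j^12*kk^4 + 9061319453720*j^12*kk^5 + 1462722283916*j^12*kk^6 + 145227705280*j^12*kk^7 + 8184654704*j^12*kk^8 + 223408640*j^12*kk^9 + 2036736*j^12*kk^10 + 15432330521704*j^13 + 35528735812360*j^13*kk + 34855535068560*j^13*kk^2 + 18978409273728*j^13*kk^3 + 6255899628360*j^13*kk^4 + 1276735633752*j^13*kk^5 + 158216147840*j^13*kk^6 + 11164711648*j^13*kk^7 + 390648320*j^13*kk^8 + 4841472*j^13*kk^9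 + 3972281143968*j^14 + 8006652835904*j^14*kk + 6748642457296*j^14*kk^2 + 3079988851360*j^14*kk^3 + 822872378672*j^14*kk^4 + 129720300224*j^14*kk^5 + 11527463312*j^14*kk^6 + 511699456*j^14*kk^7 + 8296960*j^14*kk^8 + 831728980608*j^15 + 1442967556096*j^15*kk + 1022066216064*j^15*kk^2 + 379415975040*j^15*kk^3 + 78690338368*j^15*kk^4 + 8957502720*j^15*kk^5 + 505633280*j^15*kk^6 + 10548224*j^15*kk^7 + 140090748864*j^16 + 204661661056*j^16*kk + 118257436928*j^16*kk^2 + 34217387520*j^16*kk^3 + 5153064640*j^16*kk^4 + 375464448*j^16*kk^5 + 10064896*j^16*kk^6 + 18669568512*j^17 + 22301244672*j^17*kk + 10076848640*j^17*kk^2 + 2126804224*j^17*kk^3 + 206282752*j^17*kk^4 + 7196672*j^17*kk^5 + 1920893952*j^18 + 1798857728*j^18*kk + 595051776*j^18*kk^2 + 81293824*j^18*kk^3 + 3800832*j^18*kk^4 + 146966016*j^19 + 101030400*j^19*kk + 21719040*j^19*kk^2 + 1438208*j^19*kk^3 + 7862272*j^20 + 3522560*j^20*kk + 368640*j^20*kk^2 + 262144*j^21 + 57344*j^21*kk + 4096*j^22)" using h by (simp only: of_nat_0_less_iff)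
  then show ?thesis by (simp only: polyF4)
qed

lemma bern4:
  fixes f0 f1 f2 f3 f4 s :: real
  assumes s: "0 \<le> s" "s \<le> 1"
    and b0: "f0 > 0" and b1: "4*f0+f1 > 0" and b2: "6*f0+3*f1+f2 > 0"
    and b3: "4*f0+3*f1+2*f2+f3 > 0" and b4: "f0+f1+f2+f3+f4 > 0"
  shows "f0 + f1*s + f2*s^2 + f3*s^3 + f4*s^4 > 0"
proof -
  have id: "f0 + f1*s + f2*s^2 + f3*s^3 + f4*s^4 = f0*(1-s)^4 + (4*f0+f1)*(s*(1-s)^3)
     + (6*f0+3*f1+f2)*(s^2*(1-s)^2) + (4*f0+3*f1+2*f2+f3)*(s^3*(1-s)) + (f0+f1+f2+f3+f4)*s^4"
    by algebra
  have t: "s*(1-s)^3 \<ge> 0" "s^2*(1-s)^2 \<ge> 0" "s^3*(1-s) \<ge> 0" using s by auto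
  show ?thesis
  proof (cases "s = 1")
    case True then show ?thesis using b4 by simp
  next
    case False
    then have "(1-s)^4 > 0" using s by simp
    then have "f0*(1-s)^4 > 0" using b0 by simp
    moreover have "(4*f0+f1)*(s*(1-s)^3) \<ge> 0" "(6*f0+3*f1+f2)*(s^2*(1-s)^2) \<ge> 0"
      "(4*f0+3*f1+2*f2+f3)*(s^3*(1-s)) \<ge> 0" "(f0+f1+f2+f3+f4)*s^4 \<ge> 0"
      using t b1 b2 b3 b4 s by auto
    ultimately show ?thesis unfolding id by linarith
  qed
qed

lemma Cj_ids:
  fixes A B A1 B1 v0 a b a1 b1 K1 K2 K3 N1 N2 N3 h X :: real
  assumes A: "A = a/(2*K2*N2)" and B: "B = b/(4*K2*N1*N2)" and A1: "A1 = a1/(2*K3*N3)"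
    and B1: "B1 = b1/(4*K3*N2*N3)" and v0: "v0 = 2*K1*N1*h/X"
    and pos: "K1 > 0" "K2 > 0" "K3 > 0" "N1 > 0" "N2 > 0" "N3 > 0" "h > 0" "X > 0"
  defines "Wr \<equiv> 4*K3*K2^3*N2^3*N3*X^4"
  shows "(A1*A - B1)*Wr = N2^2*K2^2*(a1*a - b1*K2)*X^4"
    and "(-(A1*B + A^3))*v0*Wr = -(K1*h*X^3*(N2^2*K2^2*a1*b + N1*N3*K3*a^3))"
    and "(3*A^2*B)*v0^2*Wr = 3*N1*N3*K3*K1^2*h^2*a^2*b*X^2"
    and "(-3*A*B^2)*v0^3*Wr = -(3*N1*N3*K3*K1^3*h^3*a*b^2*X)"
    and "(B^3)*v0^4*Wr = N1*N3*K3*K1^4*h^4*b^3"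
  using pos unfolding A B A1 B1 v0 Wr_def by (simp_all add: field_simps power2_eq_square power3_eq_cube) (simp_all add: power_def algebra_simps)

definition rho :: "nat \<Rightarrow> nat \<Rightarrow> real" where "rho i p = SS i (p+1) / (4 * SS i p)"
definition LL :: "real \<Rightarrow> real \<Rightarrow> real" where "LL x y = XX x y / (2*(y+1)*(x+y+1)*HH x y)"

lemma SS_pos: "SS i p > 0"
  unfolding SS_def by (rule sum_pos) (auto intro: U_pos)

lemma HH_pos: "x \<ge> 1 \<Longrightarrow> y \<ge> 0 \<Longrightarrow> HH x y > 0"
  unfolding HH_def by (simp add: add_pos_nonneg)

lemma XX_pos: assumes "x \<ge> 1" "y \<ge> 0" shows "XX x y > 0"
proof -
  have "HH x y > 0" using HH_pos assms by auto
  moreover have "4*(x+y)^2+7*(x+y)+x+3 > 0" using assms by (simp add: add_pos_nonneg)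
  moreover have "y*x^2 \<ge> 0" using assms by simp
  ultimately show ?thesis unfolding XX_def by (simp add: add_pos_nonneg)
qed

lemma LL_pos: "x \<ge> 1 \<Longrightarrow> y \<ge> 0 \<Longrightarrow> LL x y > 0"
  unfolding LL_def using XX_pos HH_pos by (simp add: add_pos_nonneg)

lemma AB_simp:
  assumes "x \<ge> 0" "y \<ge> 0"
  shows "Al x (x+y) / De x (x+y) = ap x (x+y) / (2*(y+2)*(x+y+2))"
    and "Be x (x+y) / De x (x+y) = bb x (x+y) / (4*(y+2)*(x+y+1)*(x+y+2))"
proof -
  have p: "y+2 > 0" "x+y+1 > 0" "x+y+2 > 0" using assms by auto
  have d: "De x (x+y) = (2*(y+2)*(x+y+2)) * (2*(x+y+1))" unfolding De_def by algebra
  have d2: "De x (x+y) = (4*(y+2)*(x+y+1)*(x+y+2))" unfolding De_def by algebra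
  have a: "Al x (x+y) = ap x (x+y) * (2*(x+y+1))" unfolding Al_def ap_def by algebra
  show "Al x (x+y) / De x (x+y) = ap x (x+y) / (2*(y+2)*(x+y+2))"
    unfolding a d using p by simp
  show "Be x (x+y) / De x (x+y) = bb x (x+y) / (4*(y+2)*(x+y+1)*(x+y+2))"
    unfolding d2 Be_def bb_def by (simp add: algebra_simps)
qed

lemma rho_rec:
  assumes "i \<ge> 1"
  shows "rho i (p+1) = ap (real i) (real i + real p) / (2*(real p+2)*(real i+real p+2))
     - (bb (real i) (real i + real p) / (4*(real p+2)*(real i+real p+1)*(real i+real p+2))) / rho i p"
proof -
  define x where "x = real i"
  define y where "y = real p"
  have xy: "x \<ge> 0" "y \<ge> 0" unfolding x_def y_def by auto
  have R: "De x (x+y) * SS i (p+2) - 4*Al x (x+y) * SS i (p+1) + 16*Be x (x+y) * SS i p = 0"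
    using recur[of "x+y" i p] unfolding x_def y_def by simp
  have D: "De x (x+y) > 0" unfolding De_def using xy by (simp add: mult_pos_pos add_pos_nonneg)
  have S: "SS i p > 0" "SS i (p+1) > 0" "SS i (p+2) > 0" by (auto intro: SS_pos)
  have "rho i (p+1) = Al x (x+y) / De x (x+y) - (Be x (x+y) / De x (x+y)) / rho i p"
  proof -
    have "SS i (p+2) = (4*Al x (x+y) * SS i (p+1) - 16*Be x (x+y) * SS i p) / De x (x+y)"
      using R D by (simp add: field_simps)
    then show ?thesis unfolding rho_def using D S
      by (simp add: field_simps numeral_2_eq_2)
  qed
  then show ?thesis using AB_simp[OF xy] unfolding x_def y_def by simp
qed

lemma rho0:
  assumes "i \<ge> 1"
  shows "rho i 0 = LL (real i) 0"
proof -
  define x where "x = real i"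
  have x: "x \<ge> 1" unfolding x_def using assms by simp
  have s1: "SS i 1 = U i 0 1 + U i 1 0" unfolding SS_def by (simp add: atMost_Suc)
  have s0: "SS i 0 = U i 0 0" unfolding SS_def by simp
  have b: "De x (x-1) * (U i 0 1 + U i 1 0) = 4 * Al x (x-1) * U i 0 0"
    using base_rec[of "x-1" i] unfolding x_def by simp
  have u: "U i 0 0 > 0" by (rule U_pos)
  have h: "HH x 0 > 0" using HH_pos[of x 0] x by simp
  have de: "De x (x-1) = 4*x*(x+1)" unfolding De_def by algebra
  have dpos: "De x (x-1) > 0" unfolding de using x by simp
  have r: "rho i 0 = (U i 0 1 + U i 1 0) / (4 * U i 0 0)"
    unfolding rho_def using s1 s0 by simp
  have "rho i 0 = Al x (x-1) / De x (x-1)"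
    unfolding r using b u dpos by (simp add: field_simps)
  also have "\<dots> = (4*x^2+8*x+3) / (2*(x+1))"
  proof -
    have al: "Al x (x-1) = (4*x^2+8*x+3) * (2*x)" unfolding Al_def by algebra
    have de2: "De x (x-1) = (2*(x+1)) * (2*x)" unfolding De_def by algebra
    show ?thesis unfolding al de2 using x by simp
  qed
  also have "\<dots> = LL x 0"
  proof -
    have xx: "XX x 0 = (4*x^2+8*x+3) * HH x 0" unfolding XX_def by algebra
    show ?thesis unfolding LL_def xx using h by simp
  qed
  finally show ?thesis unfolding x_def .
qed

lemma pos_real_sum: "(0::real) < real n \<Longrightarrow> 0 < real (n + m)" by simp

lemma key_abs:
  fixes Q1 Q2 Q3 Q4 X0 X1 H0 H1 a b :: real
  assumes "Q1 \<noteq> 0" "Q2 \<noteq> 0" "Q3 \<noteq> 0" "Q4 \<noteq> 0" "X0 \<noteq> 0" "H0 \<noteq> 0" "H1 \<noteq> 0"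
  shows "a/(2*Q1*Q2) - (b/(4*Q1*Q3*Q2)) / (X0/(2*Q4*Q3*H0)) - X1/(2*Q1*Q2*H1)
      = (X0*(a*H1 - X1) - b*Q4*H0*H1) / (2*Q1*Q2*X0*H1)"
  using assms by (simp add: field_simps)

lemma key_ind:
  fixes x y X0 X1 H0 H1 a b :: real
  assumes p: "y \<ge> 0" "x \<ge> 0" "X0 > 0" "H0 > 0" "H1 > 0"
  shows "a/(2*(y+2)*(x+y+2)) - (b/(4*(y+2)*(x+y+1)*(x+y+2))) / (X0/(2*(y+1)*(x+y+1)*H0))
        - X1/(2*(y+2)*(x+y+2)*H1)
      = (X0*(a*H1 - X1) - b*(y+1)*H0*H1) / (2*(y+2)*(x+y+2)*X0*H1)"
  using key_abs[of "y+2" "x+y+2" "x+y+1" "y+1" X0 H0 H1 a b X1] p by simp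

lemma lowb:
  assumes i: "i \<ge> 1"
  shows "rho i p \<ge> LL (real i) (real p)"
proof (induction p)
  case 0
  then show ?case using rho0[OF i] by simp
next
  case (Suc p)
  define x where "x = real i"
  define y where "y = real p"
  have x: "x \<ge> 1" unfolding x_def using i by simp
  have y: "y \<ge> 0" unfolding y_def by simp
  define A where "A = ap x (x+y) / (2*(y+2)*(x+y+2))"
  define B where "B = bb x (x+y) / (4*(y+2)*(x+y+1)*(x+y+2))"
  have rr: "rho i (Suc p) = A - B / rho i p"
    using rho_rec[OF i, of p] unfolding A_def B_def x_def y_def by simp
  have Bp: "B \<ge> 0" unfolding B_def bb_def using x y by (simp add: add_pos_nonneg)
  have L0: "LL x y > 0" using LL_pos x y by auto
  have IH: "rho i p \<ge> LL x y" using Suc.IH unfolding x_def y_def .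
  have "B / rho i p \<le> B / LL x y"
    using Bp L0 IH by (simp add: divide_left_mono)
  then have s1: "rho i (Suc p) \<ge> A - B / LL x y" unfolding rr by simp
  have X0: "XX x y > 0" using XX_pos x y by auto
  have H0: "HH x y > 0" "HH x (y+1) > 0" using HH_pos x y by auto
  have I: "XX x y*(ap x (x+y)*HH x (y+1) - XX x (y+1)) - bb x (x+y)*(y+1)*HH x y*HH x (y+1) \<ge> 0"
  proof -
    have e: "real (i-1) + 1 = x" unfolding x_def using i by simp
    show ?thesis using polyI1[of "i-1" p] unfolding e y_def[symmetric] by simp
  qed
  have LL1: "LL x (y+1) = XX x (y+1)/(2*(y+2)*(x+y+2)*HH x (y+1))"
    unfolding LL_def by (simp add: algebra_simps numeral_2_eq_2)
  have "A - B / LL x y - LL x (y+1)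
      = (XX x y*(ap x (x+y)*HH x (y+1) - XX x (y+1)) - bb x (x+y)*(y+1)*HH x y*HH x (y+1))
         / (2*(y+2)*(x+y+2)*XX x y*HH x (y+1))"
    unfolding LL1 A_def B_def using key_ind[of y x "XX x y" "HH x y" "HH x (y+1)"] X0 H0 x y
    unfolding LL_def by simp
  moreover have "(2*(y+2)*(x+y+2)*XX x y*HH x (y+1)) > 0" using X0 H0 x y by simp
  ultimately have "A - B / LL x y - LL x (y+1) \<ge> 0" using I by simp
  then have "rho i (Suc p) \<ge> LL x (y+1)" using s1 by simp
  moreover have "real (Suc p) = y + 1" unfolding y_def by simp
  ultimately show ?case unfolding x_def by (simp add: add.commute)
qed

lemma real_poly_pos: "0 < real (n::nat) \<Longrightarrow> 0 < real n" by simp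

lemma mainineq:
  assumes i: "i \<ge> 1"
  shows "rho i (p+1)^2 < rho i p * rho i (p+2)"
proof -
  define x where "x = real i"
  define y where "y = real p"
  have x: "x \<ge> 1" unfolding x_def using i by simp
  have y: "y \<ge> 0" unfolding y_def by simp
  have ej: "real (i-1) + 1 = x" unfolding x_def using i by simp
  define A where "A = ap x (x+y) / (2*(y+2)*(x+y+2))"
  define B where "B = bb x (x+y) / (4*(y+2)*(x+y+1)*(x+y+2))"
  define A1 where "A1 = ap x (x+y+1) / (2*(y+3)*(x+y+3))"
  define B1 where "B1 = bb x (x+y+1) / (4*(y+3)*(x+y+2)*(x+y+3))"
  define xr where "xr = rho i p"
  define yr where "yr = rho i (p+1)"
  define zr where "zr = rho i (p+2)"
  have ry: "yr = A - B / xr"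
    using rho_rec[OF i, of p] unfolding A_def B_def x_def y_def xr_def yr_def by simp
  have rz: "zr = A1 - B1 / yr"
  proof -
    have e: "real (p+1) = y+1" "real i = x" unfolding y_def x_def by auto
    have f: "x + (y+1) = x+y+1" "(y+1)+2 = y+3" "x+(y+1)+2 = x+y+3" "x+(y+1)+1 = x+y+2" "p+1+1 = p+2" "x+y+1+2 = x+y+3" "x+y+1+1 = x+y+2" by auto
    note h = rho_rec[OF i, of "p+1", unfolded e f]
    show ?thesis unfolding zr_def yr_def A1_def B1_def by (rule h)
  qed
  have L0: "LL x y > 0" using LL_pos x y by auto
  have xr: "xr \<ge> LL x y" unfolding xr_def x_def y_def using lowb[OF i] .
  have xpos: "xr > 0" using xr L0 by simp
  have ypos: "yr > 0"
  proof -
    have "yr \<ge> LL x (y+1)" using lowb[OF i, of "p+1"] unfolding yr_def x_def y_def by (simp add: add.commute)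
    moreover have "LL x (y+1) > 0" using LL_pos x y by auto
    ultimately show ?thesis by simp
  qed
  define v where "v = 1 / xr"
  have X0: "XX x y > 0" using XX_pos x y by auto
  have H0: "HH x y > 0" using HH_pos x y by auto
  define v0 where "v0 = 2*(y+1)*(x+y+1)*HH x y / XX x y"
  have v0: "v0 > 0" unfolding v0_def using X0 H0 x y by simp
  have vv0: "v0 = 1 / LL x y" unfolding v0_def LL_def by simp
  have vpos: "v > 0" unfolding v_def using xpos by simp
  have vle: "v \<le> v0" unfolding v_def vv0 using xr L0 by (simp add: divide_left_mono)
  define s where "s = v / v0"
  have s: "0 \<le> s" "s \<le> 1" unfolding s_def using vpos vle v0 by auto
  have vs: "v = v0 * s" unfolding s_def using v0 by simp
  define G where "G = (A1*A - B1) + (-(A1*B + A^3))*v + (3*A^2*B)*v^2 + (-3*A*B^2)*v^3 + B^3*v^4"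
  have yv: "yr = A - B*v" unfolding ry v_def by simp
  have G1: "G = A1*yr - B1 - v*yr^3" unfolding G_def yv by algebra
  have G2: "xr*zr - yr^2 = xr * G / yr"
    unfolding G1 rz using xpos ypos unfolding v_def by (simp add: field_simps power3_eq_cube power2_eq_square)
  define Wr where "Wr = 4*(y+3)*(y+2)^3*(x+y+2)^3*(x+y+3)*XX x y^4"
  have Wr: "Wr > 0" unfolding Wr_def using X0 x y by simp
  have C: "(A1*A - B1)*Wr = Fh0 x y"
       "(-(A1*B + A^3))*v0*Wr = Fh1 x y"
       "(3*A^2*B)*v0^2*Wr = Fh2 x y"
       "(-3*A*B^2)*v0^3*Wr = Fh3 x y"
       "(B^3)*v0^4*Wr = Fh4 x y"
    using Cj_ids[of A "ap x (x+y)" "y+2" "x+y+2" B "bb x (x+y)" "x+y+1" A1 "ap x (x+y+1)" "y+3" "x+y+3"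
        B1 "bb x (x+y+1)" v0 "y+1" "HH x y" "XX x y"] x y H0 X0
    unfolding A_def B_def A1_def B1_def v0_def Wr_def Fh0_def Fh1_def Fh2_def Fh3_def Fh4_def
    by (simp_all add: algebra_simps)
  have GW: "G*Wr = Fh0 x y + Fh1 x y * s + Fh2 x y * s^2 + Fh3 x y * s^3 + Fh4 x y * s^4"
  proof -
    have "G*Wr = (A1*A - B1)*Wr + ((-(A1*B + A^3))*v0*Wr)*s + ((3*A^2*B)*v0^2*Wr)*s^2
        + ((-3*A*B^2)*v0^3*Wr)*s^3 + ((B^3)*v0^4*Wr)*s^4"
      unfolding G_def vs by algebra
    then show ?thesis unfolding C .
  qed
  have f0: "Fh0 x y > 0"
  proof -
    have "ap x (x+y+1)*ap x (x+y) - bb x (x+y+1)*(y+2) > 0"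
      using polyP0_pos[of "i-1" p] unfolding ej y_def[symmetric] by simp
    then show ?thesis unfolding Fh0_def using X0 x y by simp
  qed
  have f1: "4*Fh0 x y + Fh1 x y > 0"
    using polyF1_pos[of "i-1" p] unfolding ej y_def[symmetric] by simp
  have f2: "6*Fh0 x y + 3*Fh1 x y + Fh2 x y > 0"
    using polyF2_pos[of "i-1" p] unfolding ej y_def[symmetric] by simp
  have f3: "4*Fh0 x y + 3*Fh1 x y + 2*Fh2 x y + Fh3 x y > 0"
    using polyF3_pos[of "i-1" p] unfolding ej y_def[symmetric] by simp
  have f4: "Fh0 x y + Fh1 x y + Fh2 x y + Fh3 x y + Fh4 x y > 0"
    using polyF4_pos[of "i-1" p] unfolding ej y_def[symmetric] by simp
  have "G*Wr > 0" unfolding GW using bern4[OF s f0 f1 f2 f3 f4] .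
  then have "G > 0" using Wr by (simp add: zero_less_mult_iff)
  then have "xr*zr - yr^2 > 0" unfolding G2 using xpos ypos by simp
  then show ?thesis unfolding xr_def yr_def zr_def by simp
qed

lemma ratio_rho: "boros_moll i (i+q+1) / boros_moll i (i+q) = rho i q"
proof -
  have a: "boros_moll i (i+(q+1)) = SS i (q+1) / 4^(i+(q+1))" by (rule bm_SS)
  have b: "boros_moll i (i+q) = SS i q / 4^(i+q)" by (rule bm_SS)
  have S: "SS i q > 0" "SS i (q+1) > 0" by (auto intro: SS_pos)
  have f: "(4::real)^(i+(q+1)) = 4 * 4^(i+q)" by simp
  have "i+q+1 = i+(q+1)" by simp
  then have "boros_moll i (i+q+1) / boros_moll i (i+q) = (SS i (q+1) / (4 * 4^(i+q))) / (SS i q / 4^(i+q))"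
    using a b f by simp
  also have "\<dots> = rho i q" unfolding rho_def using S by (simp add: field_simps)
  finally show ?thesis .
qed

theorem theorem3p1:
  fixes i m :: nat
  assumes "i \<ge> 1" and "m \<ge> i + 2"
  shows "(boros_moll i m / boros_moll i (m - 1)) ^ 2
    < (boros_moll i (m - 1) / boros_moll i (m - 2)) * (boros_moll i (m + 1) / boros_moll i m)"
proof -
  define p where "p = m - i - 2"
  have e: "m - 2 = i + p" "m - 1 = i + (p+1)" "m = i + (p+1) + 1" "m + 1 = i + (p+2) + 1"
    "i + p + 1 = i + (p+1)"
    using assms unfolding p_def by auto
  have r1: "boros_moll i (m-1) / boros_moll i (m-2) = rho i p"
    using ratio_rho[of i p] e by simp
  have r2: "boros_moll i m / boros_moll i (m-1) = rho i (p+1)"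
    using ratio_rho[of i "p+1"] e by simp
  have r3: "boros_moll i (m+1) / boros_moll i m = rho i (p+2)"
  proof -
    have "i + (p+1) + 1 = i + (p+2)" by simp
    then show ?thesis using ratio_rho[of i "p+2"] e by simp
  qed
  show ?thesis unfolding r1 r2 r3 using mainineq[OF assms(1)] .
qed

end
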